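(* Let $V$ be a complex vector space of dimension $n$ with a Hermitian inner product, let $k\ge 0$ and let $u$ be a (complex) $k$-form on $V$. Then $$(-1)^{k(k+1)/2}\,\lvert u\rvert^2\,\omega^{[n]}=\sum_{l=0}^{n}(-1)^l\, b_l\;\Lambda^{[l]}u\wedge\Lambda^{[l]}\overline{\mathbf I u}\wedge\omega^{[n-k+2l]},$$ where $(b_l)_{l\ge0}$ is the integer sequence defined by $b_0=1$ and $\sum_{l=0}^{p}(-1)^l\binom{p}{l}^2 b_l=0$ for all $p\ge1$.
   Context: $V$ is a complex vector space of dimension $n$ with Hermitian inner product $h$, and $\omega=-\operatorname{Im}h$ is the associated positive real $(1,1)$-form. For an element $A$ of an algebra (or an operator) set $A^{[k]}=A^k/k!$ for $k\ge0$; by convention $\omega^{[m]}=0$ for $m<0$ or $m>n$. The exterior algebra $\bigwedge^*V^*$ carries the Hermitian inner product induced by $h$, with Hodge star $*$, so that $\langle u,v\rangle\,\omega^{[n]}=u\wedge *\overline v$ and $\lvert u\rvert^2=\langle u,u\rangle$. $L$ is the Lefschetz operator $L u=\omega\wedge u$ and $\Lambda$ its adjoint with respect to this inner product. $\mathbf I=\sum_{p,q}i^{p-q}\pi_{p,q}$, where $\pi_{p,q}$ is the orthogonal projection of $\bigwedge^*V^*$ onto the $(p,q)$-forms. *)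

theory Defs
  imports Complex_Main
begin

text \<open>Model: V = C^n with its standard Hermitian product (z_1..z_n orthonormal coordinates).
  A complex form on V is written uniquely as a sum of c_S e_S, where S ranges over subsets of
  the 2n "letters" {0..<2n}: letter j < n stands for dz_j, letter n+j stands for the
  conjugate of dz_j, and e_S is the wedge product of the letters of S in increasing order.\<close>

type_synonym form = "nat set \<Rightarrow> complex"

definition letters :: "nat \<Rightarrow> nat set" where
  "letters n = {..<2*n}"

definition is_form :: "nat \<Rightarrow> form \<Rightarrow> bool" where
  "is_form n u \<longleftrightarrow> (\<forall>S. \<not> S \<subseteq> letters n \<longrightarrow> u S = 0)"

definition is_kform :: "nat \<Rightarrow> nat \<Rightarrow> form \<Rightarrow> bool" where
  "is_kform n k u \<longleftrightarrow> is_form n u \<and> (\<forall>S. card S \<noteq> k \<longrightarrow> u S = 0)"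

definition bas :: "nat set \<Rightarrow> form" where
  "bas S = (\<lambda>T. if T = S then 1 else 0)"

definition scale :: "complex \<Rightarrow> form \<Rightarrow> form" where
  "scale c u = (\<lambda>S. c * u S)"

definition wedge :: "nat \<Rightarrow> form \<Rightarrow> form \<Rightarrow> form" where
  "wedge n u v = (\<lambda>R. if R \<subseteq> letters n then
      (\<Sum>S\<in>Pow R. (-1) ^ card {(s,t). s \<in> S \<and> t \<in> R - S \<and> t < s} * u S * v (R - S))
    else 0)"

text \<open>omega = -Im h = (i/2) sum_j dz_j wedge conj(dz_j)\<close>
definition omega :: "nat \<Rightarrow> form" where
  "omega n = (\<lambda>S. if \<exists>j<n. S = {j, n + j} then \<i> / 2 else 0)"

definition Lef :: "nat \<Rightarrow> form \<Rightarrow> form" where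
  "Lef n u = wedge n (omega n) u"

text \<open>Hermitian inner product on forms induced by h.  In the basis e_S it is orthogonal,
  with |dz_j|^2 = |conj dz_j|^2 = 2 (since dz_j = dx_j + i dy_j with dx_j, dy_j orthonormal),
  hence |e_S|^2 = 2^card S.\<close>
definition form_inner :: "nat \<Rightarrow> form \<Rightarrow> form \<Rightarrow> complex" where
  "form_inner n u v = (\<Sum>S\<in>Pow (letters n). 2 ^ card S * u S * cnj (v S))"

definition Lam :: "nat \<Rightarrow> form \<Rightarrow> form" where
  "Lam n u = (THE w. is_form n w \<and>
      (\<forall>v. is_form n v \<longrightarrow> form_inner n w v = form_inner n u (Lef n v)))"

definition Lam_pow :: "nat \<Rightarrow> nat \<Rightarrow> form \<Rightarrow> form" where
  "Lam_pow n l u = scale (1 / of_nat (fact l)) ((Lam n ^^ l) u)"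

definition omega_pow :: "nat \<Rightarrow> int \<Rightarrow> form" where
  "omega_pow n m = (if m < 0 \<or> m > int n then (\<lambda>_. 0)
      else scale (1 / of_nat (fact (nat m))) ((Lef n ^^ nat m) (bas {})))"

text \<open>Orthogonal projection onto (p,q)-forms (the basis e_S is orthogonal and e_S has
  type (card (S \<inter> {..<n}), card (S \<inter> {n..<2n}))).\<close>
definition proj_pq :: "nat \<Rightarrow> nat \<Rightarrow> nat \<Rightarrow> form \<Rightarrow> form" where
  "proj_pq n p q u = (\<lambda>S. if S \<subseteq> letters n \<and> card (S \<inter> {..<n}) = p \<and> card (S \<inter> {n..<2*n}) = q
      then u S else 0)"

definition Iop :: "nat \<Rightarrow> form \<Rightarrow> form" where
  "Iop n u = (\<lambda>S. \<Sum>p\<le>2*n. \<Sum>q\<le>2*n. \<i> powi (int p - int q) * proj_pq n p q u S)"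

text \<open>Complex conjugation of forms: conj(c e_S) = conj(c) conj(e_S), where conj(e_S) is the
  wedge of the conjugated letters (dz_j and conj dz_j swapped) in the order of S; reordering
  gives the sign (-1)^(number of inversions).\<close>
definition swp :: "nat \<Rightarrow> nat \<Rightarrow> nat" where
  "swp n a = (if a < n then a + n else a - n)"

definition fconj :: "nat \<Rightarrow> form \<Rightarrow> form" where
  "fconj n u = (\<lambda>T. if T \<subseteq> letters n then
      (let S = swp n ` T in
        (-1) ^ card {(s,t). s \<in> S \<and> t \<in> S \<and> s < t \<and> swp n t < swp n s} * cnj (u S))
    else 0)"

end

theory Submission
  imports Defs
begin


definition inv :: "nat set \<Rightarrow> nat set \<Rightarrow> nat" where
  "inv A B = card {(a,b). a \<in> A \<and> b \<in> B \<and> b < a}"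

definition sg :: "nat set \<Rightarrow> nat set \<Rightarrow> complex" where
  "sg A B = (-1) ^ inv A B"

definition pr :: "nat \<Rightarrow> nat \<Rightarrow> nat set" where
  "pr n j = {j, n + j}"

definition pp :: "nat \<Rightarrow> nat set \<Rightarrow> nat set" where
  "pp n J = J \<union> (\<lambda>j. n + j) ` J"

lemma inv_fin: "finite A \<Longrightarrow> finite B \<Longrightarrow> finite {(a,b). a \<in> A \<and> b \<in> B \<and> b < a}"
  by (rule finite_subset[of _ "A \<times> B"]) auto

lemma inv_union_right:
  assumes "finite A" "finite B" "finite C" "B \<inter> C = {}"
  shows "inv A (B \<union> C) = inv A B + inv A C"
proof -
  have e: "{(a,b). a \<in> A \<and> b \<in> B \<union> C \<and> b < a} =
     {(a,b). a \<in> A \<and> b \<in> B \<and> b < a} \<union> {(a,b). a \<in> A \<and> b \<in> C \<and> b < a}" by auto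
  show ?thesis unfolding inv_def e
    by (rule card_Un_disjoint) (use assms inv_fin in auto)
qed

lemma inv_union_left:
  assumes "finite A" "finite B" "finite C" "B \<inter> C = {}"
  shows "inv (B \<union> C) A = inv B A + inv C A"
proof -
  have e: "{(a,b). a \<in> B \<union> C \<and> b \<in> A \<and> b < a} =
     {(a,b). a \<in> B \<and> b \<in> A \<and> b < a} \<union> {(a,b). a \<in> C \<and> b \<in> A \<and> b < a}" by auto
  show ?thesis unfolding inv_def e
    by (rule card_Un_disjoint) (use assms inv_fin in auto)
qed

lemma sg_union_right:
  "finite A \<Longrightarrow> finite B \<Longrightarrow> finite C \<Longrightarrow> B \<inter> C = {} \<Longrightarrow> sg A (B \<union> C) = sg A B * sg A C"
  by (simp add: sg_def inv_union_right power_add)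

lemma sg_union_left:
  "finite A \<Longrightarrow> finite B \<Longrightarrow> finite C \<Longrightarrow> B \<inter> C = {} \<Longrightarrow> sg (B \<union> C) A = sg B A * sg C A"
  by (simp add: sg_def inv_union_left power_add)

lemma inv_swap:
  assumes "finite A" "finite B" "A \<inter> B = {}"
  shows "inv A B + inv B A = card A * card B"
proof -
  let ?X = "{(a,b). a \<in> A \<and> b \<in> B \<and> b < a}"
  let ?Y = "{(a,b). a \<in> A \<and> b \<in> B \<and> a < b}"
  have "A \<times> B = ?X \<union> ?Y" using assms(3) by (auto simp: linorder_neq_iff)
  moreover have "?X \<inter> ?Y = {}" by auto
  moreover have "finite ?X" "finite ?Y" using assms(1,2)
    by (auto intro: finite_subset[of _ "A \<times> B"])
  ultimately have "card A * card B = card ?X + card ?Y"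
    using card_Un_disjoint[of ?X ?Y] card_cartesian_product[of A B] by simp
  moreover have "card ?Y = inv B A"
  proof -
    have "?Y = (\<lambda>(a,b). (b,a)) ` {(a,b). a \<in> B \<and> b \<in> A \<and> b < a}" by auto
    moreover have "inj_on (\<lambda>(a,b). (b,a)) {(a,b). a \<in> B \<and> b \<in> A \<and> b < a}"
      by (auto simp: inj_on_def)
    ultimately show ?thesis unfolding inv_def by (simp add: card_image)
  qed
  ultimately show ?thesis unfolding inv_def by simp
qed

lemma sg_swap:
  "finite A \<Longrightarrow> finite B \<Longrightarrow> A \<inter> B = {} \<Longrightarrow> sg A B * sg B A = (-1) ^ (card A * card B)"
  by (simp add: sg_def inv_swap flip: power_add)

lemma sg_sq: "sg A B * sg A B = 1"
  by (simp add: sg_def flip: power_add)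

lemma pr_pr_inv:
  assumes "j < n" "j' < n" "j \<noteq> j'"
  shows "odd (inv (pr n j) (pr n j'))"
proof (cases "j < j'")
  case True
  have "{(a,b). a \<in> pr n j \<and> b \<in> pr n j' \<and> b < a} = {(n+j, j')}"
    using True assms by (auto simp: pr_def)
  then show ?thesis by (simp add: inv_def)
next
  case False
  then have "j' < j" using assms by auto
  then have "{(a,b). a \<in> pr n j \<and> b \<in> pr n j' \<and> b < a} = {(j, j'), (n+j, j'), (n+j, n+j')}"
    using assms by (auto simp: pr_def)
  moreover have "card {(j, j'), (n+j, j'), (n+j, n+j')} = 3" using assms \<open>j'<j\<close> by auto
  ultimately show ?thesis by (simp add: inv_def)
qed

lemma sg_pr_pr: "j < n \<Longrightarrow> j' < n \<Longrightarrow> j \<noteq> j' \<Longrightarrow> sg (pr n j) (pr n j') = -1"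
  using pr_pr_inv by (simp add: sg_def)

lemma pp_insert: "pp n (insert j J) = pr n j \<union> pp n J"
  by (auto simp: pp_def pr_def)

lemma pp_empty[simp]: "pp n {} = {}" by (simp add: pp_def)

lemma finite_pp[simp]: "finite J \<Longrightarrow> finite (pp n J)" by (simp add: pp_def)

lemma finite_pr[simp]: "finite (pr n j)" by (simp add: pr_def)

lemma pr_pp_disj: "J \<subseteq> {..<n} \<Longrightarrow> j < n \<Longrightarrow> j \<notin> J \<Longrightarrow> pr n j \<inter> pp n J = {}"
  by (auto simp: pr_def pp_def)

lemma sg_pr_pp:
  assumes "finite J" "J \<subseteq> {..<n}" "j < n" "j \<notin> J"
  shows "sg (pr n j) (pp n J) = (-1) ^ card J"
  using assms
proof (induction J rule: finite_induct)
  case empty then show ?case by (simp add: sg_def inv_def)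
next
  case (insert x F)
  have "sg (pr n j) (pp n (insert x F)) = sg (pr n j) (pr n x) * sg (pr n j) (pp n F)"
    unfolding pp_insert using insert pr_pp_disj[of F n x] by (intro sg_union_right) auto
  also have "\<dots> = - ((-1) ^ card F)" using insert by (simp add: sg_pr_pr)
  finally show ?case using insert by simp
qed

lemma card_pr: "j < n \<Longrightarrow> card (pr n j) = 2" by (simp add: pr_def)

lemma sg_pm: "sg A B = 1 \<or> sg A B = -1"
  by (simp add: sg_def minus_one_power_iff)

lemma sg_sym_even:
  assumes "finite A" "finite B" "A \<inter> B = {}" "even (card A * card B)"
  shows "sg B A = sg A B"
proof -
  have "sg A B * sg B A = 1" using sg_swap[OF assms(1-3)] assms(4) by simp
  then show ?thesis using sg_pm[of A B] sg_pm[of B A] by auto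
qed

lemma sg_pp_pr:
  assumes "finite J" "J \<subseteq> {..<n}" "j < n" "j \<notin> J"
  shows "sg (pp n J) (pr n j) = (-1) ^ card J"
  using sg_sym_even[of "pr n j" "pp n J"] sg_pr_pp[OF assms] pr_pp_disj[OF assms(2-4)] assms(1) card_pr[OF assms(3)]
  by simp


lemma finite_letters[simp]: "finite (letters n)" by (simp add: letters_def)

lemma pr_inj: "j < n \<Longrightarrow> j' < n \<Longrightarrow> pr n j = pr n j' \<Longrightarrow> j = j'"
  by (auto simp: pr_def doubleton_eq_iff)

lemma omega_pr: "j < n \<Longrightarrow> omega n (pr n j) = \<i> / 2"
  by (auto simp: omega_def pr_def)

lemma wedge_sg: "wedge n u v = (\<lambda>R. if R \<subseteq> letters n then
      (\<Sum>S\<in>Pow R. sg S (R - S) * u S * v (R - S)) else 0)"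
  unfolding wedge_def sg_def inv_def by (rule refl)

lemma Lef_formula: "Lef n v R = (if R \<subseteq> letters n then
    (\<Sum>j | j < n \<and> pr n j \<subseteq> R. (\<i>/2) * sg (pr n j) (R - pr n j) * v (R - pr n j)) else 0)"
proof (cases "R \<subseteq> letters n")
  case True
  let ?G = "{j. j < n \<and> pr n j \<subseteq> R}"
  have fR: "finite R" by (rule finite_subset[OF True]) simp
  have "(\<Sum>S\<in>Pow R. sg S (R - S) * omega n S * v (R - S)) =
        (\<Sum>S\<in>pr n ` ?G. sg S (R - S) * omega n S * v (R - S))"
  proof (rule sum.mono_neutral_right)
    show "finite (Pow R)" using fR by simp
    show "pr n ` ?G \<subseteq> Pow R" by auto
    show "\<forall>S\<in>Pow R - pr n ` ?G. sg S (R - S) * omega n S * v (R - S) = 0"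
    proof
      fix S assume S: "S \<in> Pow R - pr n ` ?G"
      have "omega n S = 0"
      proof (rule ccontr)
        assume "omega n S \<noteq> 0"
        then obtain j where "j < n" "S = pr n j" unfolding omega_def pr_def by (auto split: if_splits)
        then show False using S by blast
      qed
      then show "sg S (R - S) * omega n S * v (R - S) = 0" by simp
    qed
  qed
  also have "\<dots> = (\<Sum>j\<in>?G. sg (pr n j) (R - pr n j) * omega n (pr n j) * v (R - pr n j))"
  proof -
    have "inj_on (pr n) ?G" unfolding inj_on_def using pr_inj by blast
    then show ?thesis by (simp add: sum.reindex o_def)
  qed
  also have "\<dots> = (\<Sum>j\<in>?G. (\<i>/2) * sg (pr n j) (R - pr n j) * v (R - pr n j))"
    by (rule sum.cong) (auto simp: omega_pr)
  finally show ?thesis using True by (simp add: Lef_def wedge_sg)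
qed (simp add: Lef_def wedge_sg)

lemma Lef_outside: "\<not> R \<subseteq> letters n \<Longrightarrow> Lef n v R = 0"
  by (simp add: Lef_formula)

definition cOm :: "nat \<Rightarrow> complex" where
  "cOm m = (\<i>/2) ^ m * (-1) ^ (m * (m - 1) div 2)"

definition ispp :: "nat \<Rightarrow> nat \<Rightarrow> nat set \<Rightarrow> bool" where
  "ispp n m S \<longleftrightarrow> (\<exists>J. J \<subseteq> {..<n} \<and> card J = m \<and> S = pp n J)"

lemma fin_sub: "J \<subseteq> {..<(n::nat)} \<Longrightarrow> finite J"
  using finite_subset by blast

lemma pp_sub_letters: "J \<subseteq> {..<n} \<Longrightarrow> pp n J \<subseteq> letters n"
  by (auto simp: pp_def letters_def)

lemma pp_inj: "J \<subseteq> {..<n} \<Longrightarrow> J' \<subseteq> {..<n} \<Longrightarrow> pp n J = pp n J' \<Longrightarrow> J = J'"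
proof -
  assume a: "J \<subseteq> {..<n}" "J' \<subseteq> {..<n}" "pp n J = pp n J'"
  have "J = pp n J \<inter> {..<n}" using a(1) by (auto simp: pp_def)
  moreover have "J' = pp n J' \<inter> {..<n}" using a(2) by (auto simp: pp_def)
  ultimately show ?thesis using a(3) by simp
qed

lemma pr_sub_pp: "J \<subseteq> {..<n} \<Longrightarrow> j < n \<Longrightarrow> pr n j \<subseteq> pp n J \<longleftrightarrow> j \<in> J"
  by (auto simp: pr_def pp_def)

lemma pp_minus_pr: "J \<subseteq> {..<n} \<Longrightarrow> j < n \<Longrightarrow> pp n J - pr n j = pp n (J - {j})"
  by (auto simp: pr_def pp_def)

lemma card_pp: "J \<subseteq> {..<n} \<Longrightarrow> card (pp n J) = 2 * card J"
proof -
  assume a: "J \<subseteq> {..<n}"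
  then have f: "finite J" by (rule fin_sub)
  have "card (pp n J) = card J + card ((\<lambda>j. n + j) ` J)"
    unfolding pp_def using a f by (intro card_Un_disjoint) auto
  also have "card ((\<lambda>j. n + j) ` J) = card J" by (rule card_image) (auto simp: inj_on_def)
  finally show ?thesis by simp
qed

lemma Lef_pow_formula:
  assumes "m \<le> n"
  shows "(Lef n ^^ m) (bas {}) S = (if ispp n m S then of_nat (fact m) * cOm m else 0)"
  using assms
proof (induction m arbitrary: S)
  case 0
  have "ispp n 0 S \<longleftrightarrow> S = {}" unfolding ispp_def
    by (auto dest: fin_sub intro!: exI[of _ "{}"])
  then show ?case by (simp add: bas_def cOm_def)
next
  case (Suc m)
  show ?case
  proof (cases "S \<subseteq> letters n")
    case False
    then have "\<not> ispp n (Suc m) S" unfolding ispp_def using pp_sub_letters by blast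
    then show ?thesis using False by (simp add: Lef_outside)
  next
    case True
    let ?G = "{j. j < n \<and> pr n j \<subseteq> S}"
    have IH: "\<And>T. (Lef n ^^ m) (bas {}) T = (if ispp n m T then of_nat (fact m) * cOm m else 0)"
      using Suc by simp
    have "(Lef n ^^ Suc m) (bas {}) S =
      (\<Sum>j\<in>?G. (\<i>/2) * sg (pr n j) (S - pr n j) * (if ispp n m (S - pr n j) then of_nat (fact m) * cOm m else 0))"
      using True by (simp add: Lef_formula IH)
    also have "\<dots> = (if ispp n (Suc m) S then of_nat (fact (Suc m)) * cOm (Suc m) else 0)"
    proof (cases "ispp n (Suc m) S")
      case True
      then obtain K where K: "K \<subseteq> {..<n}" "card K = Suc m" "S = pp n K" unfolding ispp_def by blast
      have fK: "finite K" using K(1) by (rule fin_sub)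
      have G: "?G = K" using K pr_sub_pp[OF K(1)] by auto
      have "(\<Sum>j\<in>?G. (\<i>/2) * sg (pr n j) (S - pr n j) * (if ispp n m (S - pr n j) then of_nat (fact m) * cOm m else 0))
        = (\<Sum>j\<in>K. (\<i>/2) * (-1) ^ m * (of_nat (fact m) * cOm m))"
        unfolding G
      proof (rule sum.cong)
        fix j assume j: "j \<in> K"
        have jn: "j < n" using j K by auto
        have e: "S - pr n j = pp n (K - {j})" using K(1,3) jn by (simp add: pp_minus_pr)
        have "ispp n m (S - pr n j)" unfolding ispp_def e using K j fK
          by (intro exI[of _ "K - {j}"]) auto
        moreover have "sg (pr n j) (S - pr n j) = (-1) ^ m" unfolding e
          using K j fK jn by (subst sg_pr_pp) auto
        ultimately show "(\<i>/2) * sg (pr n j) (S - pr n j) * (if ispp n m (S - pr n j) then of_nat (fact m) * cOm m else 0)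
           = (\<i>/2) * (-1) ^ m * (of_nat (fact m) * cOm m)" by simp
      qed simp
      also have "\<dots> = of_nat (Suc m) * ((\<i>/2) * (-1) ^ m * (of_nat (fact m) * cOm m))"
        using K(2) by simp
      also have "\<dots> = of_nat (fact (Suc m)) * cOm (Suc m)"
      proof -
        have "Suc m * (Suc m - 1) div 2 = m * (m - 1) div 2 + m"
          by (cases m) (auto simp: algebra_simps)
        then have "cOm (Suc m) = (\<i>/2) * (-1)^m * cOm m" by (simp add: cOm_def power_add)
        then show ?thesis by (simp add: algebra_simps)
      qed
      finally show ?thesis using True by simp
    next
      case False
      have "(\<Sum>j\<in>?G. (\<i>/2) * sg (pr n j) (S - pr n j) * (if ispp n m (S - pr n j) then of_nat (fact m) * cOm m else 0)) = 0"
      proof (rule sum.neutral, rule ballI)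
        fix j assume j: "j \<in> ?G"
        have "\<not> ispp n m (S - pr n j)"
        proof
          assume "ispp n m (S - pr n j)"
          then obtain J where J: "J \<subseteq> {..<n}" "card J = m" "S - pr n j = pp n J" unfolding ispp_def by blast
          have jJ: "j \<notin> J" using J(3) by (auto simp: pr_def pp_def)
          have fJ: "finite J" using J(1) by (rule fin_sub)
          have "S = pp n (insert j J)" using J(3) j by (auto simp: pp_insert)
          then have "ispp n (Suc m) S" unfolding ispp_def using J j jJ fJ
            by (intro exI[of _ "insert j J"]) auto
          then show False using False by simp
        qed
        then show "(\<i>/2) * sg (pr n j) (S - pr n j) * (if ispp n m (S - pr n j) then of_nat (fact m) * cOm m else 0) = 0"
          by simp
      qed
      then show ?thesis using False by simp
    qed
    finally show ?thesis .
  qed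
qed

lemma omega_pow_formula:
  assumes "m \<le> n"
  shows "omega_pow n (int m) S = (if ispp n m S then cOm m else 0)"
  using assms by (simp add: omega_pow_def scale_def Lef_pow_formula)


definition free :: "nat \<Rightarrow> nat set \<Rightarrow> nat set" where
  "free n T = {j. j < n \<and> pr n j \<inter> T = {}}"

definition Lm :: "nat \<Rightarrow> form \<Rightarrow> form" where
  "Lm n u T = (if T \<subseteq> letters n then
     (\<Sum>j\<in>free n T. (-2*\<i>) * sg (pr n j) T * u (T \<union> pr n j)) else 0)"

lemma finite_free[simp]: "finite (free n T)" by (simp add: free_def)

lemma cnj_sg[simp]: "cnj (sg A B) = sg A B" by (simp add: sg_def)

lemma pr_letters: "j < n \<Longrightarrow> pr n j \<subseteq> letters n" by (auto simp: pr_def letters_def)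

lemma Lm_adj: "form_inner n (Lm n u) v = form_inner n u (Lef n v)"
proof -
  let ?A = "Sigma (Pow (letters n)) (free n)"
  let ?B = "Sigma (Pow (letters n)) (\<lambda>R. {j. j < n \<and> pr n j \<subseteq> R})"
  have "form_inner n (Lm n u) v = (\<Sum>T\<in>Pow (letters n). \<Sum>j\<in>free n T.
        2 ^ card T * ((-2*\<i>) * sg (pr n j) T * u (T \<union> pr n j)) * cnj (v T))"
    unfolding form_inner_def
    by (rule sum.cong) (auto simp: Lm_def sum_distrib_left sum_distrib_right)
  also have "\<dots> = (\<Sum>(T,j)\<in>?A. 2 ^ card T * ((-2*\<i>) * sg (pr n j) T * u (T \<union> pr n j)) * cnj (v T))"
    by (rule sum.Sigma) (auto intro: finite_subset)
  also have "\<dots> = (\<Sum>(R,j)\<in>?B. 2 ^ card R * u R * ((-\<i>/2) * sg (pr n j) (R - pr n j) * cnj (v (R - pr n j))))"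
  proof (rule sum.reindex_bij_witness[where i = "\<lambda>(R,j). (R - pr n j, j)" and j = "\<lambda>(T,j). (T \<union> pr n j, j)"])
    fix a assume "a \<in> ?A"
    then obtain T j where a: "a = (T,j)" "T \<subseteq> letters n" "j < n" "pr n j \<inter> T = {}" by (auto simp: free_def)
    show "(\<lambda>(R,j). (R - pr n j, j)) ((\<lambda>(T,j). (T \<union> pr n j, j)) a) = a" using a by auto
    show "(\<lambda>(T,j). (T \<union> pr n j, j)) a \<in> ?B" using a pr_letters[of j n] by auto
    have fT: "finite T" using a(2) by (rule finite_subset) simp
    have c: "card (T \<union> pr n j) = card T + 2"
      using a fT card_Un_disjoint[of T "pr n j"] card_pr[of j n] by (simp add: Int_commute)
    have e: "T \<union> pr n j - pr n j = T" using a by auto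
    show "(case (\<lambda>(T,j). (T \<union> pr n j, j)) a of (R,j) \<Rightarrow> 2 ^ card R * u R * ((-\<i>/2) * sg (pr n j) (R - pr n j) * cnj (v (R - pr n j))))
       = (case a of (T,j) \<Rightarrow> 2 ^ card T * ((-2*\<i>) * sg (pr n j) T * u (T \<union> pr n j)) * cnj (v T))"
      using a c e by (simp add: power_add)
  next
    fix b assume "b \<in> ?B"
    then obtain R j where b: "b = (R,j)" "R \<subseteq> letters n" "j < n" "pr n j \<subseteq> R" by auto
    show "(\<lambda>(T,j). (T \<union> pr n j, j)) ((\<lambda>(R,j). (R - pr n j, j)) b) = b" using b by auto
    show "(\<lambda>(R,j). (R - pr n j, j)) b \<in> ?A" using b by (auto simp: free_def)
  qed
  also have "\<dots> = (\<Sum>R\<in>Pow (letters n). \<Sum>j | j < n \<and> pr n j \<subseteq> R.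
       2 ^ card R * u R * ((-\<i>/2) * sg (pr n j) (R - pr n j) * cnj (v (R - pr n j))))"
    by (rule sum.Sigma[symmetric]) (auto intro: finite_subset)
  also have "\<dots> = form_inner n u (Lef n v)"
    unfolding form_inner_def
    by (rule sum.cong) (auto simp: Lef_formula sum_distrib_left algebra_simps)
  finally show ?thesis .
qed

lemma is_form_Lm: "is_form n (Lm n u)"
  by (simp add: is_form_def Lm_def)

lemma form_inner_diff: "form_inner n (\<lambda>S. w S - z S) v = form_inner n w v - form_inner n z v"
  by (simp add: form_inner_def algebra_simps sum_subtractf)

lemma form_inner_self_zero:
  assumes "is_form n d" "form_inner n d d = 0"
  shows "d = (\<lambda>_. 0)"
proof
  fix S
  have e: "form_inner n d d = of_real (\<Sum>S\<in>Pow (letters n). 2 ^ card S * (cmod (d S))^2)"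
    unfolding form_inner_def by (simp add: mult.assoc flip: complex_norm_square)
  have "(\<Sum>S\<in>Pow (letters n). 2 ^ card S * (cmod (d S))^2) = 0"
    using assms(2) e by (simp only: of_real_eq_0_iff)
  then have "\<forall>S\<in>Pow (letters n). 2 ^ card S * (cmod (d S))^2 = 0"
    by (subst (asm) sum_nonneg_eq_0_iff) auto
  then show "d S = 0" using assms(1) unfolding is_form_def by (cases "S \<subseteq> letters n") auto
qed

lemma Lam_eq: "Lam n u = Lm n u"
  unfolding Lam_def
proof (rule the_equality)
  show "is_form n (Lm n u) \<and> (\<forall>v. is_form n v \<longrightarrow> form_inner n (Lm n u) v = form_inner n u (Lef n v))"
    by (simp add: is_form_Lm Lm_adj)
next
  fix w assume w: "is_form n w \<and> (\<forall>v. is_form n v \<longrightarrow> form_inner n w v = form_inner n u (Lef n v))"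
  let ?d = "\<lambda>S. w S - Lm n u S"
  have fd: "is_form n ?d" using w is_form_Lm[of n u] by (simp add: is_form_def)
  have "form_inner n ?d ?d = 0" using w fd by (simp add: form_inner_diff Lm_adj)
  then have "?d = (\<lambda>_. 0)" using fd form_inner_self_zero by blast
  then show "w = Lm n u" by (simp add: fun_eq_iff)
qed


lemma sum_insert_count:
  fixes g :: "nat set \<Rightarrow> complex"
  assumes F: "finite F"
  shows "(\<Sum>j\<in>F. \<Sum>J\<in>{J. J \<subseteq> F - {j} \<and> card J = l}. g (insert j J)) =
         of_nat (Suc l) * (\<Sum>K\<in>{K. K \<subseteq> F \<and> card K = Suc l}. g K)"
proof -
  let ?A = "Sigma F (\<lambda>j. {J. J \<subseteq> F - {j} \<and> card J = l})"
  let ?B = "Sigma {K. K \<subseteq> F \<and> card K = Suc l} (\<lambda>K. K)"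
  have fA: "finite ?A" using F by (intro finite_SigmaI) (auto intro: finite_subset)
  have "(\<Sum>j\<in>F. \<Sum>J\<in>{J. J \<subseteq> F - {j} \<and> card J = l}. g (insert j J)) = (\<Sum>(j,J)\<in>?A. g (insert j J))"
    using F by (intro sum.Sigma) (auto intro: finite_subset)
  also have "\<dots> = (\<Sum>(K,j)\<in>?B. g K)"
  proof (rule sum.reindex_bij_witness[where i = "\<lambda>(K,j). (j, K - {j})" and j = "\<lambda>(j,J). (insert j J, j)"])
    fix a assume "a \<in> ?A"
    then obtain j J where a: "a = (j,J)" "j \<in> F" "J \<subseteq> F - {j}" "card J = l" by auto
    have "finite J" using a F finite_subset by (metis Diff_subset finite_subset)
    moreover have "j \<notin> J" using a by auto
    ultimately show "(\<lambda>(K,j). (j, K - {j})) ((\<lambda>(j,J). (insert j J, j)) a) = a" 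
      and "(\<lambda>(j,J). (insert j J, j)) a \<in> ?B"
      and "(case (\<lambda>(j,J). (insert j J, j)) a of (K,j) \<Rightarrow> g K) = (case a of (j,J) \<Rightarrow> g (insert j J))"
      using a by auto
  next
    fix b assume "b \<in> ?B"
    then obtain K j where b: "b = (K,j)" "K \<subseteq> F" "card K = Suc l" "j \<in> K" by auto
    have "finite K" using b F finite_subset by blast
    then show "(\<lambda>(j,J). (insert j J, j)) ((\<lambda>(K,j). (j, K - {j})) b) = b"
      and "(\<lambda>(K,j). (j, K - {j})) b \<in> ?A" using b by (auto simp: insert_absorb)
  qed
  also have "\<dots> = (\<Sum>K\<in>{K. K \<subseteq> F \<and> card K = Suc l}. \<Sum>j\<in>K. g K)"
    using F by (intro sum.Sigma[symmetric]) (auto intro: finite_subset)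
  also have "\<dots> = (\<Sum>K\<in>{K. K \<subseteq> F \<and> card K = Suc l}. of_nat (Suc l) * g K)"
    by (rule sum.cong) auto
  finally show ?thesis by (simp add: sum_distrib_left)
qed

lemma fin_free: "J \<subseteq> free n T \<Longrightarrow> finite J"
  using finite_free finite_subset by blast

definition FJ :: "nat \<Rightarrow> nat \<Rightarrow> nat set \<Rightarrow> nat set set" where
  "FJ n l T = {J. J \<subseteq> free n T \<and> card J = l}"

definition cL :: "nat \<Rightarrow> complex" where
  "cL l = (-2*\<i>) ^ l * (-1) ^ (l * (l - 1) div 2)"

lemma free_sub: "free n T \<subseteq> {..<n}" by (auto simp: free_def)

lemma free_insert_pr: "j \<in> free n T \<Longrightarrow> free n (T \<union> pr n j) = free n T - {j}"
  by (auto simp: free_def pr_def)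

lemma pp_disj: "J \<subseteq> free n T \<Longrightarrow> pp n J \<inter> T = {}"
  by (auto simp: free_def pp_def pr_def)

lemma Lam_pow_it:
  assumes uf: "is_form n u"
  shows "(Lam n ^^ l) u T = (if T \<subseteq> letters n then
     of_nat (fact l) * cL l * (\<Sum>J\<in>FJ n l T. sg (pp n J) T * u (T \<union> pp n J)) else 0)"
proof (induction l arbitrary: T)
  case 0
  have "FJ n 0 T = {{}}" by (auto simp: FJ_def dest: fin_free)
  then show ?case using uf by (simp add: cL_def Lam_eq Lm_def sg_def inv_def is_form_def)
next
  case (Suc l)
  show ?case
  proof (cases "T \<subseteq> letters n")
    case False then show ?thesis by (simp add: Lam_eq Lm_def)
  next
    case True
    have fT: "finite T" by (rule finite_subset[OF True]) simp
    let ?F = "free n T"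
    have "(Lam n ^^ Suc l) u T = (\<Sum>j\<in>?F. (-2*\<i>) * sg (pr n j) T * (Lam n ^^ l) u (T \<union> pr n j))"
      using True by (simp add: Lam_eq Lm_def)
    also have "\<dots> = (\<Sum>j\<in>?F. \<Sum>J\<in>{J. J \<subseteq> ?F - {j} \<and> card J = l}.
          ((-2*\<i>) * of_nat (fact l) * cL l * (-1)^l) * (sg (pp n (insert j J)) T * u (T \<union> pp n (insert j J))))"
    proof (rule sum.cong[OF refl])
      fix j assume j: "j \<in> ?F"
      have jn: "j < n" and dj: "pr n j \<inter> T = {}" using j by (auto simp: free_def)
      have sub: "T \<union> pr n j \<subseteq> letters n" using True pr_letters[OF jn] by auto
      have FJe: "FJ n l (T \<union> pr n j) = {J. J \<subseteq> ?F - {j} \<and> card J = l}"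
        unfolding FJ_def free_insert_pr[OF j] ..
      have "(Lam n ^^ l) u (T \<union> pr n j) = of_nat (fact l) * cL l *
          (\<Sum>J\<in>{J. J \<subseteq> ?F - {j} \<and> card J = l}. sg (pp n J) (T \<union> pr n j) * u (T \<union> pr n j \<union> pp n J))"
        using Suc.IH[of "T \<union> pr n j"] sub FJe by simp
      also have "\<dots> = of_nat (fact l) * cL l * (\<Sum>J\<in>{J. J \<subseteq> ?F - {j} \<and> card J = l}.
           (-1)^l * sg (pp n J) T * u (T \<union> pp n (insert j J)))"
      proof (intro arg_cong[where f = "\<lambda>x. of_nat (fact l) * cL l * x"] sum.cong[OF refl])
        fix J assume J: "J \<in> {J. J \<subseteq> ?F - {j} \<and> card J = l}"
        have Jsub: "J \<subseteq> {..<n}" using J free_sub by blast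
        have fJ: "finite J" using Jsub by (rule fin_sub)
        have jJ: "j \<notin> J" using J by auto
        have dJ: "pp n J \<inter> T = {}" using J pp_disj[of J n T] by auto
        have "sg (pp n J) (T \<union> pr n j) = sg (pp n J) T * sg (pp n J) (pr n j)"
          using dj fT fJ by (intro sg_union_right) auto
        also have "\<dots> = sg (pp n J) T * (-1)^l" using sg_pp_pr[OF fJ Jsub jn jJ] J by simp
        finally show "sg (pp n J) (T \<union> pr n j) * u (T \<union> pr n j \<union> pp n J) =
            (-1)^l * sg (pp n J) T * u (T \<union> pp n (insert j J))"
          by (simp add: pp_insert Un_assoc Un_commute Un_left_commute)
      qed
      finally have e: "(Lam n ^^ l) u (T \<union> pr n j) = \<dots>" .
      show "(-2*\<i>) * sg (pr n j) T * (Lam n ^^ l) u (T \<union> pr n j) =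
          (\<Sum>J\<in>{J. J \<subseteq> ?F - {j} \<and> card J = l}.
          ((-2*\<i>) * of_nat (fact l) * cL l * (-1)^l) * (sg (pp n (insert j J)) T * u (T \<union> pp n (insert j J))))"
        unfolding e sum_distrib_left
      proof (rule sum.cong[OF refl])
        fix J assume J: "J \<in> {J. J \<subseteq> ?F - {j} \<and> card J = l}"
        have Jsub: "J \<subseteq> {..<n}" using J free_sub by blast
        have fJ: "finite J" using Jsub by (rule fin_sub)
        have jJ: "j \<notin> J" using J by auto
        have "sg (pp n (insert j J)) T = sg (pr n j) T * sg (pp n J) T"
          unfolding pp_insert using pr_pp_disj[OF Jsub jn jJ] fT fJ by (intro sg_union_left) auto
        then show "(-2*\<i>) * sg (pr n j) T * (of_nat (fact l) * cL l * ((-1)^l * sg (pp n J) T * u (T \<union> pp n (insert j J)))) =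
          ((-2*\<i>) * of_nat (fact l) * cL l * (-1)^l) * (sg (pp n (insert j J)) T * u (T \<union> pp n (insert j J)))"
          by (simp add: algebra_simps)
      qed
    qed
    also have "\<dots> = ((-2*\<i>) * of_nat (fact l) * cL l * (-1)^l) * (of_nat (Suc l) *
        (\<Sum>K\<in>{K. K \<subseteq> ?F \<and> card K = Suc l}. sg (pp n K) T * u (T \<union> pp n K)))"
      using sum_insert_count[OF finite_free[of n T], where l=l and g="\<lambda>K. sg (pp n K) T * u (T \<union> pp n K)"]
      by (simp only: sum_distrib_left[symmetric])
    also have "\<dots> = of_nat (fact (Suc l)) * cL (Suc l) * (\<Sum>J\<in>FJ n (Suc l) T. sg (pp n J) T * u (T \<union> pp n J))"
    proof -
      have "Suc l * (Suc l - 1) div 2 = l * (l - 1) div 2 + l"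
        by (cases l) (auto simp: algebra_simps)
      then have "cL (Suc l) = (-2*\<i>) * (-1)^l * cL l" by (simp add: cL_def power_add)
      then show ?thesis by (simp add: FJ_def algebra_simps)
    qed
    finally show ?thesis using True by simp
  qed
qed

lemma Lam_pow_formula:
  assumes "is_form n u"
  shows "Lam_pow n l u T = (if T \<subseteq> letters n then
     cL l * (\<Sum>J\<in>FJ n l T. sg (pp n J) T * u (T \<union> pp n J)) else 0)"
  by (simp add: Lam_pow_def scale_def Lam_pow_it[OF assms])


definition hol :: "nat \<Rightarrow> nat set \<Rightarrow> nat" where "hol n S = card (S \<inter> {..<n})"
definition ant :: "nat \<Rightarrow> nat set \<Rightarrow> nat" where "ant n S = card (S \<inter> {n..<2*n})"

lemma Iop_formula: "Iop n u S = (if S \<subseteq> letters n then \<i> powi (int (hol n S) - int (ant n S)) * u S else 0)"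
proof -
  have hb: "hol n S \<le> 2*n" unfolding hol_def
    by (rule order_trans[OF card_mono[of "{..<n}"]]) auto
  have ab: "ant n S \<le> 2*n" unfolding ant_def
    by (rule order_trans[OF card_mono[of "{n..<2*n}"]]) auto
  have e: "\<And>p q. proj_pq n p q u S = (if q = ant n S then (if p = hol n S then (if S \<subseteq> letters n then u S else 0) else 0) else 0)"
    by (auto simp: proj_pq_def hol_def ant_def)
  show ?thesis unfolding Iop_def e using hb ab
    by (simp add: if_distrib[where f = "\<lambda>x. _ * x"] sum.delta' cong: if_cong)
qed

definition swp' :: "nat \<Rightarrow> nat set \<Rightarrow> nat set" where "swp' n T = swp n ` T"

lemma swp_swp: "a < 2*n \<Longrightarrow> swp n (swp n a) = a" by (auto simp: swp_def)
lemma swp_lt: "a < 2*n \<Longrightarrow> swp n a < 2*n" by (auto simp: swp_def)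

lemma swp'_letters: "T \<subseteq> letters n \<Longrightarrow> swp' n T \<subseteq> letters n"
  by (auto simp: swp'_def letters_def swp_lt)

lemma swp'_swp': "T \<subseteq> letters n \<Longrightarrow> swp' n (swp' n T) = T"
proof -
  assume T: "T \<subseteq> letters n"
  have "swp' n (swp' n T) = (\<lambda>a. swp n (swp n a)) ` T" by (simp add: swp'_def image_image)
  also have "\<dots> = (\<lambda>a. a) ` T" using T by (intro image_cong) (auto simp: letters_def swp_swp)
  also have "\<dots> = T" by simp
  finally show ?thesis .
qed

lemma swp_inj: "inj_on (swp n) (letters n)"
  by (rule inj_on_inverseI[where g = "swp n"]) (auto simp: letters_def swp_swp)

lemma card_swp': "T \<subseteq> letters n \<Longrightarrow> card (swp' n T) = card T"
  unfolding swp'_def by (rule card_image) (rule inj_on_subset[OF swp_inj])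

lemma fconj_count:
  assumes "S \<subseteq> letters n"
  shows "card {(s,t). s \<in> S \<and> t \<in> S \<and> s < t \<and> swp n t < swp n s} = hol n S * ant n S"
proof -
  have "{(s,t). s \<in> S \<and> t \<in> S \<and> s < t \<and> swp n t < swp n s} = (S \<inter> {..<n}) \<times> (S \<inter> {n..<2*n})"
    using assms by (auto simp: swp_def letters_def)
  then show ?thesis by (simp add: hol_def ant_def card_cartesian_product)
qed

lemma fconj_formula: "fconj n w T = (if T \<subseteq> letters n then
     (-1) ^ (hol n (swp' n T) * ant n (swp' n T)) * cnj (w (swp' n T)) else 0)"
  using fconj_count[OF swp'_letters] by (simp add: fconj_def swp'_def Let_def)

definition Ef :: "nat \<Rightarrow> nat set \<Rightarrow> complex" where
  "Ef n S = (-1) ^ (hol n S * ant n S) * cnj (\<i> powi (int (hol n S) - int (ant n S)))"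

lemma w_formula: "fconj n (Iop n u) T = (if T \<subseteq> letters n then Ef n (swp' n T) * cnj (u (swp' n T)) else 0)"
  by (simp add: fconj_formula Iop_formula swp'_letters Ef_def)

lemma w_kform: "is_kform n k u \<Longrightarrow> is_kform n k (fconj n (Iop n u))"
  unfolding is_kform_def is_form_def
  by (auto simp: w_formula card_swp')


lemma alt_pow_sum: "finite F \<Longrightarrow> (\<Sum>Z\<in>Pow F. (-1::int) ^ card Z) = (if F = {} then 1 else 0)"
  using prod_diff_conv_sum[of F "\<lambda>_. 1::int" "\<lambda>_. 1"] by (auto simp: power_0_left card_eq_0_iff)

lemma g_lemma:
  fixes b :: "nat \<Rightarrow> int"
  assumes b0: "b 0 = 1" and brec: "\<forall>p\<ge>1. (\<Sum>l=0..p. (-1) ^ l * int (p choose l) ^ 2 * b l) = 0"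
    and "p \<le> n"
  shows "(\<Sum>l=0..n. (-1) ^ l * b l * int (p choose l) ^ 2) = (if p = 0 then 1 else 0)"
proof -
  have "(\<Sum>l=0..n. (-1) ^ l * b l * int (p choose l) ^ 2) = (\<Sum>l=0..p. (-1) ^ l * int (p choose l) ^ 2 * b l)"
    by (rule sum.mono_neutral_cong_right) (use assms(3) in auto)
  then show ?thesis using brec b0 by (cases "p = 0") auto
qed

lemma comb_lemma:
  fixes b :: "nat \<Rightarrow> int"
  assumes b0: "b 0 = 1" and brec: "\<forall>p\<ge>1. (\<Sum>l=0..p. (-1) ^ l * int (p choose l) ^ 2 * b l) = 0"
    and f1: "finite A1" and f2: "finite A2" and c1: "card A1 = a" and c2: "card A2 = a" and an: "a \<le> n"
  shows "(\<Sum>l=0..n. (-1) ^ l * b l * (\<Sum>J1\<in>{J. J \<subseteq> A1 \<and> card J = l}. \<Sum>J2\<in>{J. J \<subseteq> A2 \<and> card J = l}.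
            (if (A1 - J1) \<inter> (A2 - J2) = {} then 1 else 0)))
       = (if A1 = A2 then (-1) ^ a else 0)"
proof -
  let ?I = "A1 \<inter> A2"
  have fI: "finite ?I" using f1 by simp
  have fP: "finite (Pow ?I)" using fI by (simp del: Pow_Int_eq)
  have inner: "(\<Sum>J1\<in>{J. J \<subseteq> A1 \<and> card J = l}. \<Sum>J2\<in>{J. J \<subseteq> A2 \<and> card J = l}.
            (if (A1 - J1) \<inter> (A2 - J2) = {} then 1 else 0)) =
      (\<Sum>Z\<in>Pow ?I. (-1) ^ card Z * int ((a - card Z) choose l) ^ 2)" for l
  proof -
    have step1: "(if (A1 - J1) \<inter> (A2 - J2) = {} then 1 else 0) =
        (\<Sum>Z\<in>Pow ?I. (-1::int) ^ card Z * (if Z \<inter> J1 = {} then 1 else 0) * (if Z \<inter> J2 = {} then 1 else 0))"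
      if "J1 \<subseteq> A1" "J2 \<subseteq> A2" for J1 J2
    proof -
      have e: "(A1 - J1) \<inter> (A2 - J2) = ?I - J1 - J2" by auto
      have "(\<Sum>Z\<in>Pow ?I. (-1::int) ^ card Z * (if Z \<inter> J1 = {} then 1 else 0) * (if Z \<inter> J2 = {} then 1 else 0))
          = (\<Sum>Z\<in>Pow (?I - J1 - J2). (-1::int) ^ card Z)"
        by (rule sum.mono_neutral_cong_right) (use fP in \<open>auto simp del: Pow_Int_eq\<close>)
      also have "\<dots> = (if ?I - J1 - J2 = {} then 1 else 0)" using fI by (intro alt_pow_sum) auto
      finally show ?thesis unfolding e by simp
    qed
    have cnt: "(\<Sum>J\<in>{J. J \<subseteq> A \<and> card J = l}. (if Z \<inter> J = {} then 1 else 0::int)) = int ((a - card Z) choose l)"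
      if "Z \<subseteq> A" "finite A" "card A = a" for Z A
    proof -
      have "(\<Sum>J\<in>{J. J \<subseteq> A \<and> card J = l}. (if Z \<inter> J = {} then 1 else 0::int)) =
            int (card {J. J \<subseteq> A - Z \<and> card J = l})"
        by (subst sum.If_cases) (use that in \<open>auto intro!: arg_cong[where f = card] simp: finite_subset\<close>)
      also have "\<dots> = int ((a - card Z) choose l)"
        using that by (simp add: n_subsets card_Diff_subset finite_subset)
      finally show ?thesis .
    qed
    have "(\<Sum>J1\<in>{J. J \<subseteq> A1 \<and> card J = l}. \<Sum>J2\<in>{J. J \<subseteq> A2 \<and> card J = l}.
            (if (A1 - J1) \<inter> (A2 - J2) = {} then 1 else 0)) =
        (\<Sum>J1\<in>{J. J \<subseteq> A1 \<and> card J = l}. \<Sum>J2\<in>{J. J \<subseteq> A2 \<and> card J = l}. \<Sum>Z\<in>Pow ?I.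
           (-1::int) ^ card Z * (if Z \<inter> J1 = {} then 1 else 0) * (if Z \<inter> J2 = {} then 1 else 0))"
      by (intro sum.cong refl) (auto simp: step1)
    also have "\<dots> = (\<Sum>Z\<in>Pow ?I. (-1::int) ^ card Z *
        (\<Sum>J1\<in>{J. J \<subseteq> A1 \<and> card J = l}. (if Z \<inter> J1 = {} then 1 else 0)) *
        (\<Sum>J2\<in>{J. J \<subseteq> A2 \<and> card J = l}. (if Z \<inter> J2 = {} then 1 else 0)))"
    proof -
      have "(\<Sum>J1\<in>{J. J \<subseteq> A1 \<and> card J = l}. \<Sum>J2\<in>{J. J \<subseteq> A2 \<and> card J = l}. \<Sum>Z\<in>Pow ?I.
           (-1::int) ^ card Z * (if Z \<inter> J1 = {} then 1 else 0) * (if Z \<inter> J2 = {} then 1 else 0)) =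
         (\<Sum>J1\<in>{J. J \<subseteq> A1 \<and> card J = l}. \<Sum>Z\<in>Pow ?I. \<Sum>J2\<in>{J. J \<subseteq> A2 \<and> card J = l}.
           (-1::int) ^ card Z * (if Z \<inter> J1 = {} then 1 else 0) * (if Z \<inter> J2 = {} then 1 else 0))"
        by (rule sum.cong[OF refl], rule sum.swap)
      also have "\<dots> = (\<Sum>Z\<in>Pow ?I. \<Sum>J1\<in>{J. J \<subseteq> A1 \<and> card J = l}. \<Sum>J2\<in>{J. J \<subseteq> A2 \<and> card J = l}.
           (-1::int) ^ card Z * (if Z \<inter> J1 = {} then 1 else 0) * (if Z \<inter> J2 = {} then 1 else 0))"
        by (rule sum.swap)
      also have "\<dots> = (\<Sum>Z\<in>Pow ?I. (-1::int) ^ card Z *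
        (\<Sum>J1\<in>{J. J \<subseteq> A1 \<and> card J = l}. (if Z \<inter> J1 = {} then 1 else 0)) *
        (\<Sum>J2\<in>{J. J \<subseteq> A2 \<and> card J = l}. (if Z \<inter> J2 = {} then 1 else 0)))"
        by (rule sum.cong[OF refl]) (simp only: mult.assoc sum_product, simp only: sum_distrib_left mult.assoc)
      finally show ?thesis .
    qed
    also have "\<dots> = (\<Sum>Z\<in>Pow ?I. (-1) ^ card Z * int ((a - card Z) choose l) ^ 2)"
      by (rule sum.cong[OF refl]) (auto simp: cnt f1 f2 c1 c2 power2_eq_square)
    finally show ?thesis .
  qed
  have "(\<Sum>l=0..n. (-1) ^ l * b l * (\<Sum>J1\<in>{J. J \<subseteq> A1 \<and> card J = l}. \<Sum>J2\<in>{J. J \<subseteq> A2 \<and> card J = l}.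
            (if (A1 - J1) \<inter> (A2 - J2) = {} then 1 else 0)))
     = (\<Sum>Z\<in>Pow ?I. (-1) ^ card Z * (\<Sum>l=0..n. (-1) ^ l * b l * int ((a - card Z) choose l) ^ 2))"
    unfolding inner by (simp add: sum_distrib_left algebra_simps) (rule sum.swap)
  also have "\<dots> = (\<Sum>Z\<in>Pow ?I. (-1) ^ card Z * (if card Z = a then 1 else 0))"
  proof (rule sum.cong[OF refl])
    fix Z assume Z: "Z \<in> Pow ?I"
    have "card Z \<le> a" using Z c1 f1 by (metis Int_lower1 PowD card_mono order.trans)
    then show "(-1) ^ card Z * (\<Sum>l=0..n. (-1) ^ l * b l * int ((a - card Z) choose l) ^ 2) =
        (-1) ^ card Z * (if card Z = a then 1 else 0)"
      using g_lemma[OF b0 brec, of "a - card Z" n] an by auto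
  qed
  also have "\<dots> = (\<Sum>Z\<in>{Z. Z \<subseteq> ?I \<and> card Z = a}. (-1::int) ^ a)"
    by (rule sum.mono_neutral_cong_right) (use fP in \<open>auto simp del: Pow_Int_eq\<close>)
  also have "\<dots> = (-1) ^ a * int (card {Z. Z \<subseteq> ?I \<and> card Z = a})"
    by simp
  also have "\<dots> = (-1) ^ a * int (card ?I choose a)" using n_subsets[OF fI, of a] by (simp del: Int_subset_iff)
  also have "\<dots> = (if A1 = A2 then (-1) ^ a else 0)"
  proof -
    have cI: "card ?I \<le> a" using c1 f1 by (metis Int_lower1 card_mono)
    have "card ?I = a \<longleftrightarrow> A1 = A2"
    proof
      assume "card ?I = a"
      then have "?I = A1" using f1 c1 by (metis Int_lower1 card_subset_eq)
      then have "A1 \<subseteq> A2" by auto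
      then show "A1 = A2" using f2 c1 c2 by (metis card_subset_eq)
    qed (use c1 in auto)
    then show ?thesis using cI by (auto simp: binomial_eq_0)
  qed
  finally show ?thesis .
qed


definition pairs :: "nat \<Rightarrow> nat set \<Rightarrow> nat set" where
  "pairs n S = {j. j < n \<and> j \<in> S \<and> n + j \<in> S}"

definition sing :: "nat \<Rightarrow> nat set \<Rightarrow> nat set" where
  "sing n S = S - pp n (pairs n S)"

definition idx :: "nat \<Rightarrow> nat set \<Rightarrow> nat set" where
  "idx n Q = {j. j < n \<and> (j \<in> Q \<or> n + j \<in> Q)}"

lemma letters_eq: "letters n = {..<2*n}" by (simp add: letters_def)

lemma pairs_sub: "pairs n S \<subseteq> {..<n}" by (auto simp: pairs_def)
lemma idx_sub: "idx n Q \<subseteq> {..<n}" by (auto simp: idx_def)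

lemma mem_pp: "J \<subseteq> {..<n} \<Longrightarrow> x \<in> pp n J \<longleftrightarrow> (if x < n then x \<in> J else x - n \<in> J \<and> n \<le> x)"
  by (auto simp: pp_def image_iff) (metis add_diff_inverse_nat)

lemma swp_pp: "J \<subseteq> {..<n} \<Longrightarrow> x < 2*n \<Longrightarrow> swp n x \<in> pp n J \<longleftrightarrow> x \<in> pp n J"
  by (auto simp: mem_pp swp_def)

lemma mem_swp': "T \<subseteq> letters n \<Longrightarrow> x < 2*n \<Longrightarrow> x \<in> swp' n T \<longleftrightarrow> swp n x \<in> T"
  unfolding swp'_def letters_def
  by (metis (no_types, lifting) imageE image_eqI lessThan_iff subsetD swp_lt swp_swp)

lemma mem_pp_pairs: "x < 2*n \<Longrightarrow> x \<in> pp n (pairs n S) \<longleftrightarrow> x \<in> S \<and> swp n x \<in> S"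
  unfolding mem_pp[OF pairs_sub] by (auto simp: pairs_def swp_def add.commute)

lemma mem_sing: "S \<subseteq> letters n \<Longrightarrow> x \<in> sing n S \<longleftrightarrow> x \<in> S \<and> swp n x \<notin> S"
  unfolding sing_def letters_def using mem_pp_pairs[of x n S] by auto


lemma pp_letters_eq: "pp n {..<n} = letters n"
  unfolding set_eq_iff mem_pp[OF order_refl] by (auto simp: letters_def)

lemma pp_Un: "pp n (X \<union> Y) = pp n X \<union> pp n Y" by (auto simp: pp_def)

lemma pp_Diff: "X \<subseteq> {..<n} \<Longrightarrow> Y \<subseteq> {..<n} \<Longrightarrow> pp n (X - Y) = pp n X - pp n Y"
  by (auto simp: pp_def)

lemma pp_mono: "X \<subseteq> Y \<Longrightarrow> pp n X \<subseteq> pp n Y" by (auto simp: pp_def)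

lemma ppI_disj: "X \<subseteq> {..<n} \<Longrightarrow> Y \<subseteq> {..<n} \<Longrightarrow> X \<inter> Y = {} \<Longrightarrow> pp n X \<inter> pp n Y = {}"
  by (auto simp: pp_def)

lemma pp_pairs_sub: "pp n (pairs n S) \<subseteq> S"
  by (auto simp: pp_def pairs_def)

lemma S_decomp: "S \<subseteq> letters n \<Longrightarrow> S = pp n (pairs n S) \<union> sing n S"
  unfolding sing_def using pp_pairs_sub[of n S] by blast

lemma sing_sub: "sing n S \<subseteq> S" by (auto simp: sing_def)

lemma pp_sing_disj: "X \<subseteq> {..<n} \<Longrightarrow> X \<inter> idx n Q = {} \<Longrightarrow> pp n X \<inter> Q = {}"
  by (auto simp: pp_def idx_def)

lemma idx_sing_pairs: "S \<subseteq> letters n \<Longrightarrow> idx n (sing n S) \<inter> pairs n S = {}"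
  by (auto simp: idx_def mem_sing pairs_def swp_def letters_def add.commute)

lemma sing_swp_disj: "S \<subseteq> letters n \<Longrightarrow> sing n S \<inter> swp' n (sing n S) = {}"
proof -
  assume S: "S \<subseteq> letters n"
  have Q: "sing n S \<subseteq> letters n" using S sing_sub by blast
  show ?thesis
  proof (rule ccontr)
    assume "sing n S \<inter> swp' n (sing n S) \<noteq> {}"
    then obtain x where x: "x \<in> sing n S" "x \<in> swp' n (sing n S)" by blast
    have xl: "x < 2*n" using x(1) Q by (auto simp: letters_def)
    have "swp n x \<in> sing n S" using x(2) mem_swp'[OF Q xl] by simp
    then have "swp n x \<in> S" using sing_sub by blast
    then show False using x(1) mem_sing[OF S] by blast
  qed
qed

lemma sing_swp_union: "S \<subseteq> letters n \<Longrightarrow> sing n S \<union> swp' n (sing n S) = pp n (idx n (sing n S))"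
proof -
  assume S: "S \<subseteq> letters n"
  have Q: "sing n S \<subseteq> letters n" using S sing_sub by blast
  show ?thesis
  proof (rule set_eqI)
    fix x
    show "x \<in> sing n S \<union> swp' n (sing n S) \<longleftrightarrow> x \<in> pp n (idx n (sing n S))"
    proof (cases "x < 2*n")
      case True
      then show ?thesis
        unfolding mem_pp[OF idx_sub] using mem_swp'[OF Q True] by (auto simp: idx_def swp_def add.commute)
    next
      case False
      then show ?thesis using Q pp_sub_letters[OF idx_sub, of n "sing n S"] swp'_letters[OF Q]
        by (auto simp: letters_def)
    qed
  qed
qed

lemma card_idx_sing: "S \<subseteq> letters n \<Longrightarrow> card (idx n (sing n S)) = card (sing n S)"
proof -
  assume S: "S \<subseteq> letters n"
  have Q: "sing n S \<subseteq> letters n" using S sing_sub by blast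
  have fQ: "finite (sing n S)" using Q by (rule finite_subset) simp
  have "2 * card (idx n (sing n S)) = card (pp n (idx n (sing n S)))" by (simp add: card_pp idx_sub)
  also have "\<dots> = card (sing n S) + card (swp' n (sing n S))"
    by (simp add: sing_swp_union[OF S, symmetric] card_Un_disjoint fQ swp'_def sing_swp_disj[OF S, unfolded swp'_def])
  also have "\<dots> = 2 * card (sing n S)" using card_swp'[OF Q] by simp
  finally show ?thesis by simp
qed

lemma card_decomp: "S \<subseteq> letters n \<Longrightarrow> card S = card (sing n S) + 2 * card (pairs n S)"
proof -
  assume S: "S \<subseteq> letters n"
  have fS: "finite S" using S by (rule finite_subset) simp
  have "card S = card (pp n (pairs n S)) + card (sing n S)"
    using S_decomp[OF S] fS card_Un_disjoint[of "pp n (pairs n S)" "sing n S"]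
    by (metis Diff_disjoint finite_Un sing_def)
  then show ?thesis by (simp add: card_pp pairs_sub)
qed

lemma swp'_pp: "J \<subseteq> {..<n} \<Longrightarrow> swp' n (pp n J) = pp n J"
proof -
  assume J: "J \<subseteq> {..<n}"
  have P: "pp n J \<subseteq> letters n" using pp_sub_letters[OF J] .
  show ?thesis
  proof (rule set_eqI)
    fix x show "x \<in> swp' n (pp n J) \<longleftrightarrow> x \<in> pp n J"
      using mem_swp'[OF P, of x] swp_pp[OF J, of x] P swp'_letters[OF P]
      by (cases "x < 2*n") (auto simp: letters_def)
  qed
qed

lemma swp'_Un: "swp' n (X \<union> Y) = swp' n X \<union> swp' n Y" by (auto simp: swp'_def)

lemma swp'_Diff: "X \<subseteq> letters n \<Longrightarrow> Y \<subseteq> letters n \<Longrightarrow> swp' n (X - Y) = swp' n X - swp' n Y"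
  unfolding swp'_def by (rule inj_on_image_set_diff[OF swp_inj]) auto

lemma pairs_swp: "S \<subseteq> letters n \<Longrightarrow> pairs n (swp' n S) = pairs n S"
  unfolding pairs_def using mem_swp'[of S n] by (auto simp: swp_def letters_def add.commute)


lemma config_sing:
  assumes S1: "S1 \<subseteq> letters n" and S2: "S2 \<subseteq> letters n"
    and J1: "J1 \<subseteq> pairs n S1" and J2: "J2 \<subseteq> pairs n S2"
    and AB: "(S1 - pp n J1) \<inter> (swp' n S2 - pp n J2) = {}"
    and J3: "J3 \<subseteq> {..<n}" "letters n - (S1 - pp n J1) - (swp' n S2 - pp n J2) = pp n J3"
  shows "sing n S1 = sing n S2"
proof -
  have J1n: "J1 \<subseteq> {..<n}" and J2n: "J2 \<subseteq> {..<n}" using J1 J2 pairs_sub by blast+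
  have P1: "pp n J1 \<subseteq> S1" using pp_mono[OF J1] pp_pairs_sub by blast
  have P2: "pp n J2 \<subseteq> S2" using pp_mono[OF J2] pp_pairs_sub by blast
  have swS2: "swp' n S2 \<subseteq> letters n" using swp'_letters[OF S2] .
  have inL: "\<And>x. x \<in> letters n \<longleftrightarrow> x < 2*n" by (simp add: letters_def)
  have key: "\<And>x. x < 2*n \<Longrightarrow> x \<in> S1 \<and> swp n x \<notin> S1 \<longleftrightarrow> x \<in> S2 \<and> swp n x \<notin> S2"
  proof -
    fix x assume x: "x < 2*n"
    have sx: "swp n x < 2*n" using swp_lt[OF x] .
    have ssx: "swp n (swp n x) = x" using swp_swp[OF x] .
    have m2: "\<And>y. y < 2*n \<Longrightarrow> y \<in> swp' n S2 \<longleftrightarrow> swp n y \<in> S2" using mem_swp'[OF S2] by blast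
    have p1: "\<And>y. y < 2*n \<Longrightarrow> swp n y \<in> pp n J1 \<longleftrightarrow> y \<in> pp n J1" using swp_pp[OF J1n] by blast
    have p2: "\<And>y. y < 2*n \<Longrightarrow> swp n y \<in> pp n J2 \<longleftrightarrow> y \<in> pp n J2" using swp_pp[OF J2n] by blast
    have p3: "\<And>y. y < 2*n \<Longrightarrow> swp n y \<in> pp n J3 \<longleftrightarrow> y \<in> pp n J3" using swp_pp[OF J3(1)] by blast
    have cover: "\<And>y. y < 2*n \<Longrightarrow> y \<in> S1 - pp n J1 \<or> y \<in> swp' n S2 - pp n J2 \<or> y \<in> pp n J3"
      using J3(2) inL by blast
    have c3: "\<And>y. y \<in> pp n J3 \<Longrightarrow> y \<notin> S1 - pp n J1 \<and> y \<notin> swp' n S2 - pp n J2"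
      using J3(2) by blast
    show "x \<in> S1 \<and> swp n x \<notin> S1 \<longleftrightarrow> x \<in> S2 \<and> swp n x \<notin> S2"
    proof
      assume a: "x \<in> S1 \<and> swp n x \<notin> S1"
      have xA: "x \<in> S1 - pp n J1" using a P1 p1[OF x] by blast
      have "swp n x \<notin> S1 - pp n J1" using a by blast
      moreover have "swp n x \<notin> pp n J3" using c3 xA p3[OF x] by blast
      ultimately have sB: "swp n x \<in> swp' n S2 - pp n J2" using cover[OF sx] by blast
      then have "x \<in> S2" using m2[OF sx] ssx by simp
      moreover have "swp n x \<notin> S2"
      proof
        assume "swp n x \<in> S2"
        then have "x \<in> swp' n S2" using m2[OF x] by simp
        then have "x \<in> pp n J2" using xA AB by blast
        then show False using sB p2[OF x] by blast
      qed
      ultimately show "x \<in> S2 \<and> swp n x \<notin> S2" by blast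
    next
      assume a: "x \<in> S2 \<and> swp n x \<notin> S2"
      have sS: "swp n x \<in> swp' n S2" using m2[OF sx] ssx a by simp
      have xnS: "x \<notin> swp' n S2" using m2[OF x] a by simp
      have sB: "swp n x \<in> swp' n S2 - pp n J2"
      proof -
        have "x \<notin> pp n J2" using xnS P2 swp'_pp[OF J2n] swp'_letters
          by (metis (no_types, lifting) a m2 p2 subsetD x)
        then show ?thesis using sS p2[OF x] by blast
      qed
      have "x \<notin> swp' n S2 - pp n J2" using xnS by blast
      moreover have "x \<notin> pp n J3" using c3 sB p3[OF x] by blast
      ultimately have xA: "x \<in> S1 - pp n J1" using cover[OF x] by blast
      moreover have "swp n x \<notin> S1"
      proof
        assume "swp n x \<in> S1"
        then have "swp n x \<in> pp n J1" using sB AB by blast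
        then show False using xA p1[OF x] by blast
      qed
      ultimately show "x \<in> S1 \<and> swp n x \<notin> S1" by blast
    qed
  qed
  show ?thesis
  proof (rule set_eqI)
    fix x show "x \<in> sing n S1 \<longleftrightarrow> x \<in> sing n S2"
      using key[of x] mem_sing[OF S1] mem_sing[OF S2] S1 S2 by (auto simp: letters_def)
  qed
qed


lemma sg_empty_left[simp]: "sg {} B = 1" by (simp add: sg_def inv_def)
lemma sg_empty_right[simp]: "sg A {} = 1" by (simp add: sg_def inv_def)

lemma neg1_cong: "even (x + y) \<Longrightarrow> (-1::complex) ^ x = (-1) ^ y"
  by (auto simp: minus_one_power_iff)

lemma sg_pp_pp:
  assumes "X \<subseteq> {..<n}" "Y \<subseteq> {..<n}" "X \<inter> Y = {}"
  shows "sg (pp n X) (pp n Y) = (-1) ^ (card X * card Y)"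
proof -
  have fX: "finite X" using assms(1) by (rule fin_sub)
  have fY: "finite Y" using assms(2) by (rule fin_sub)
  show ?thesis using fX assms
  proof (induction X rule: finite_induct)
    case empty then show ?case by simp
  next
    case (insert j X)
    have jn: "j < n" and jY: "j \<notin> Y" using insert by auto
    have "sg (pp n (insert j X)) (pp n Y) = sg (pr n j) (pp n Y) * sg (pp n X) (pp n Y)"
      unfolding pp_insert using insert fX pr_pp_disj[of X n j]
      by (intro sg_union_left) (auto simp: fY)
    also have "\<dots> = (-1) ^ card Y * (-1) ^ (card X * card Y)"
      using insert sg_pr_pp[OF fY assms(2) jn jY] by auto
    finally show ?case using insert by (simp add: power_add)
  qed
qed

lemma sg_sym_pp:
  assumes "X \<subseteq> {..<n}" "finite Q" "pp n X \<inter> Q = {}"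
  shows "sg Q (pp n X) = sg (pp n X) Q"
  using sg_sym_even[of "pp n X" Q] assms fin_sub[OF assms(1)] by (simp add: card_pp)

lemma sg_pp_QQ':
  assumes "X \<subseteq> {..<n}" "I \<subseteq> {..<n}" "X \<inter> I = {}" "Q \<inter> Q' = {}" "Q \<union> Q' = pp n I"
  shows "sg (pp n X) Q * sg (pp n X) Q' = (-1) ^ (card X * card I)"
proof -
  have fQ: "finite Q" "finite Q'" using assms(5) fin_sub[OF assms(2)]
    by (metis finite_Un finite_pp)+
  have "sg (pp n X) Q * sg (pp n X) Q' = sg (pp n X) (Q \<union> Q')"
    using fQ assms(4) fin_sub[OF assms(1)] by (simp add: sg_union_right)
  also have "\<dots> = (-1) ^ (card X * card I)" unfolding assms(5) by (rule sg_pp_pp[OF assms(1-3)])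
  finally show ?thesis .
qed

lemma sg_pp_Q_swap:
  assumes "X \<subseteq> {..<n}" "I \<subseteq> {..<n}" "X \<inter> I = {}" "Q \<inter> Q' = {}" "Q \<union> Q' = pp n I"
  shows "sg (pp n X) Q = sg (pp n X) Q' * (-1) ^ (card X * card I)"
proof -
  have h: "sg (pp n X) Q * sg (pp n X) Q' = (-1) ^ (card X * card I)" using sg_pp_QQ'[OF assms] .
  have "sg (pp n X) Q = sg (pp n X) Q * (sg (pp n X) Q' * sg (pp n X) Q')" using sg_sq[of "pp n X" Q'] by simp
  also have "\<dots> = (sg (pp n X) Q * sg (pp n X) Q') * sg (pp n X) Q'" by (simp only: mult.assoc)
  finally show ?thesis unfolding h by simp
qed

lemma sign_lemma:
  assumes sub: "X1 \<subseteq> {..<n}" "X2 \<subseteq> {..<n}" "J1 \<subseteq> {..<n}" "J2 \<subseteq> {..<n}" "J3 \<subseteq> {..<n}" "I \<subseteq> {..<n}"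
    and disj: "X1 \<inter> J1 = {}" "X2 \<inter> J2 = {}" "X1 \<inter> X2 = {}" "J3 \<inter> X1 = {}" "J3 \<inter> X2 = {}"
      "X1 \<inter> I = {}" "X2 \<inter> I = {}" "J1 \<inter> I = {}" "J2 \<inter> I = {}" "J3 \<inter> I = {}"
    and QQ: "Q \<inter> Q' = {}" "Q \<union> Q' = pp n I"
    and cards: "card X1 = d" "card X2 = d" "card J1 = l" "card J2 = l" "card I = q" "card J3 + 2 * d + q = n"
  shows "sg (pp n X1 \<union> Q) (pp n X2 \<union> Q') * sg (pp n X1 \<union> Q \<union> (pp n X2 \<union> Q')) (pp n J3) *
         sg (pp n J1) (pp n X1 \<union> Q) * sg (pp n J2) (pp n X2 \<union> Q')
       = (-1) ^ d * (sg (pp n (X1 \<union> J1)) Q' * sg (pp n (X2 \<union> J2)) Q * sg Q Q' * (-1) ^ ((n - q) * q))"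
proof -
  have fQ: "finite Q" "finite Q'" using QQ(2) fin_sub[OF sub(6)] by (metis finite_Un finite_pp)+
  have fin: "finite (pp n X1)" "finite (pp n X2)" "finite (pp n J1)" "finite (pp n J2)" "finite (pp n J3)"
    using sub by (auto dest: fin_sub)
  have QI: "Q \<subseteq> pp n I" "Q' \<subseteq> pp n I" using QQ(2) by auto
  have dQ: "\<And>X. X \<subseteq> {..<n} \<Longrightarrow> X \<inter> I = {} \<Longrightarrow> pp n X \<inter> Q = {} \<and> pp n X \<inter> Q' = {}"
    using QI ppI_disj[OF _ sub(6)] by blast
  have d1: "pp n X1 \<inter> Q = {}" "pp n X1 \<inter> Q' = {}" using dQ[OF sub(1) disj(6)] by auto
  have d2: "pp n X2 \<inter> Q = {}" "pp n X2 \<inter> Q' = {}" using dQ[OF sub(2) disj(7)] by auto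
  have d3: "pp n J3 \<inter> Q = {}" "pp n J3 \<inter> Q' = {}" using dQ[OF sub(5)] disj(10) by (auto simp: Int_commute)
  have dJ1: "pp n J1 \<inter> Q = {}" "pp n J1 \<inter> Q' = {}" using dQ[OF sub(3) disj(8)] by auto
  have dJ2: "pp n J2 \<inter> Q = {}" "pp n J2 \<inter> Q' = {}" using dQ[OF sub(4) disj(9)] by auto
  have p12: "pp n X1 \<inter> pp n X2 = {}" using ppI_disj[OF sub(1,2) disj(3)] .
  have p13: "pp n X1 \<inter> pp n J3 = {}" using ppI_disj[OF sub(1,5)] disj(4) by (auto simp: Int_commute)
  have p23: "pp n X2 \<inter> pp n J3 = {}" using ppI_disj[OF sub(2,5)] disj(5) by (auto simp: Int_commute)
  have p11: "pp n J1 \<inter> pp n X1 = {}" using ppI_disj[OF sub(3,1)] disj(1) by (auto simp: Int_commute)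
  have p22: "pp n J2 \<inter> pp n X2 = {}" using ppI_disj[OF sub(4,2)] disj(2) by (auto simp: Int_commute)
  have e1: "sg (pp n X1 \<union> Q) (pp n X2 \<union> Q') =
      sg (pp n X1) (pp n X2) * sg (pp n X1) Q' * (sg Q (pp n X2) * sg Q Q')"
    using fQ fin d1 d2 p12 QQ(1)
    by (simp add: sg_union_left sg_union_right Int_Un_distrib Int_Un_distrib2 Int_commute)
  have e2: "sg (pp n X1 \<union> Q \<union> (pp n X2 \<union> Q')) (pp n J3) =
      sg (pp n X1) (pp n J3) * sg Q (pp n J3) * (sg (pp n X2) (pp n J3) * sg Q' (pp n J3))"
    using fQ fin d1 d2 p12 QQ(1)
    by (simp add: sg_union_left Int_Un_distrib Int_Un_distrib2 Int_commute)
  have e3: "sg (pp n J1) (pp n X1 \<union> Q) = sg (pp n J1) (pp n X1) * sg (pp n J1) Q"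
    using fQ fin d1 by (simp add: sg_union_right)
  have e4: "sg (pp n J2) (pp n X2 \<union> Q') = sg (pp n J2) (pp n X2) * sg (pp n J2) Q'"
    using fQ fin d2 by (simp add: sg_union_right)
  have v1: "sg (pp n X1) (pp n X2) = (-1) ^ (d * d)" using sg_pp_pp[OF sub(1,2) disj(3)] cards by simp
  have v2: "sg (pp n X1) (pp n J3) = (-1) ^ (d * card J3)" using sg_pp_pp[OF sub(1,5)] disj(4) cards by (simp add: Int_commute)
  have v3: "sg (pp n X2) (pp n J3) = (-1) ^ (d * card J3)" using sg_pp_pp[OF sub(2,5)] disj(5) cards by (simp add: Int_commute)
  have v4: "sg (pp n J1) (pp n X1) = (-1) ^ (l * d)" using sg_pp_pp[OF sub(3,1)] disj(1) cards by (simp add: Int_commute)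
  have v5: "sg (pp n J2) (pp n X2) = (-1) ^ (l * d)" using sg_pp_pp[OF sub(4,2)] disj(2) cards by (simp add: Int_commute)
  have v6: "sg Q (pp n J3) * sg Q' (pp n J3) = (-1) ^ (card J3 * q)"
    using sg_sym_pp[OF sub(5) fQ(1) d3(1)] sg_sym_pp[OF sub(5) fQ(2) d3(2)]
      sg_pp_QQ'[OF sub(5,6) disj(10) QQ] cards by simp
  have v7: "sg Q (pp n X2) = sg (pp n X2) Q" using sg_sym_pp[OF sub(2) fQ(1) d2(1)] .
  have v8: "sg (pp n J1) Q = sg (pp n J1) Q' * (-1) ^ (l * q)"
    using sg_pp_Q_swap[OF sub(3,6) disj(8) QQ] cards by simp
  have v9: "sg (pp n J2) Q' = sg (pp n J2) Q * (-1) ^ (l * q)"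
    using sg_pp_Q_swap[OF sub(4,6) disj(9), of Q' Q] QQ cards by (simp add: Int_commute Un_commute)
  have w1: "sg (pp n (X1 \<union> J1)) Q' = sg (pp n X1) Q' * sg (pp n J1) Q'"
    unfolding pp_Un using fQ fin disj(1) ppI_disj[OF sub(1,3) disj(1)] by (simp add: sg_union_left)
  have w2: "sg (pp n (X2 \<union> J2)) Q = sg (pp n X2) Q * sg (pp n J2) Q"
    unfolding pp_Un using fQ fin disj(2) ppI_disj[OF sub(2,4) disj(2)] by (simp add: sg_union_left)
  have par: "(-1::complex) ^ (d * d) * (-1) ^ (d * card J3) * (-1) ^ (d * card J3) * (-1) ^ (card J3 * q) *
      (-1) ^ (l * d) * (-1) ^ (l * q) * (-1) ^ (l * d) * (-1) ^ (l * q) = (-1) ^ d * (-1) ^ ((n - q) * q)"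
  proof -
    have "n - q = card J3 + 2 * d" using cards(6) by simp
    then have "(-1::complex) ^ (d * d + d * card J3 + d * card J3 + card J3 * q + l * d + l * q + l * d + l * q) =
        (-1) ^ (d + (n - q) * q)"
      by (intro neg1_cong) (simp add: algebra_simps)
    then show ?thesis by (simp add: power_add)
  qed
  show ?thesis
    unfolding e1 e2 e3 e4 v1 v2 v3 v4 v5 v7 v8 w1 w2 v9 
    using v6 par by (simp add: algebra_simps)
qed


definition Psi :: "nat \<Rightarrow> nat \<Rightarrow> nat \<Rightarrow> nat set \<Rightarrow> nat set \<Rightarrow> nat set \<Rightarrow> nat set \<Rightarrow> complex" where
  "Psi n k l S1 S2 J1 J2 = (let A = S1 - pp n J1; B = swp' n S2 - pp n J2 in
     if A \<inter> B = {} then sg A B * sg (A \<union> B) (letters n - (A \<union> B)) * sg (pp n J1) A * sg (pp n J2) B *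
        omega_pow n (int n - int k + 2 * int l) (letters n - (A \<union> B)) else 0)"

definition GG :: "nat \<Rightarrow> nat set \<Rightarrow> nat set \<Rightarrow> complex" where
  "GG n S1 S2 = sg (pp n (pairs n S1)) (swp' n (sing n S1)) * sg (pp n (pairs n S2)) (sing n S1) *
     sg (sing n S1) (swp' n (sing n S1)) * (-1) ^ ((n - card (sing n S1)) * card (sing n S1))"

lemma psi_val:
  assumes S1: "S1 \<subseteq> letters n" and S2: "S2 \<subseteq> letters n" and QQ: "sing n S1 = sing n S2"
    and c1: "card S1 = k" and c2: "card S2 = k"
    and J1: "J1 \<subseteq> pairs n S1" "card J1 = l" and J2: "J2 \<subseteq> pairs n S2" "card J2 = l"
  shows "Psi n k l S1 S2 J1 J2 = (if (pairs n S1 - J1) \<inter> (pairs n S2 - J2) = {} then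
     (-1) ^ (card (pairs n S1) - l) * GG n S1 S2 * cOm (n - card (sing n S1) - 2 * (card (pairs n S1) - l)) else 0)"
proof -
  define Q where "Q = sing n S1"
  define Q' where "Q' = swp' n Q"
  define A1 where "A1 = pairs n S1"
  define A2 where "A2 = pairs n S2"
  define X1 where "X1 = A1 - J1"
  define X2 where "X2 = A2 - J2"
  define I where "I = idx n Q"
  define q where "q = card Q"
  define a where "a = card A1"
  have QL: "Q \<subseteq> letters n" using S1 sing_sub Q_def by blast
  have fQ: "finite Q" using QL by (rule finite_subset) simp
  have A1n: "A1 \<subseteq> {..<n}" and A2n: "A2 \<subseteq> {..<n}" using pairs_sub A1_def A2_def by blast+
  have In: "I \<subseteq> {..<n}" using idx_sub I_def by blast
  have fA1: "finite A1" using A1n by (rule fin_sub)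
  have fA2: "finite A2" using A2n by (rule fin_sub)
  have cq: "card I = q" using card_idx_sing[OF S1] unfolding I_def q_def Q_def .
  have IA1: "I \<inter> A1 = {}" using idx_sing_pairs[OF S1] unfolding I_def Q_def A1_def .
  have IA2: "I \<inter> A2 = {}" using idx_sing_pairs[OF S2] unfolding I_def QQ Q_def A2_def .
  have QQ'1: "Q \<inter> Q' = {}" using sing_swp_disj[OF S1] unfolding Q'_def Q_def .
  have QQ'2: "Q \<union> Q' = pp n I" using sing_swp_union[OF S1] unfolding Q'_def Q_def I_def .
  have ca2: "card A2 = a"
    using card_decomp[OF S1] card_decomp[OF S2] c1 c2 QQ unfolding a_def A1_def A2_def by simp
  have J1A: "J1 \<subseteq> A1" and J2A: "J2 \<subseteq> A2" using J1 J2 A1_def A2_def by auto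
  have J1n: "J1 \<subseteq> {..<n}" and J2n: "J2 \<subseteq> {..<n}" using J1A J2A A1n A2n by auto
  have X1n: "X1 \<subseteq> {..<n}" and X2n: "X2 \<subseteq> {..<n}" using X1_def X2_def A1n A2n by auto
  have cX1: "card X1 = a - l" unfolding X1_def a_def using J1A J1(2) fA1 by (simp add: card_Diff_subset finite_subset)
  have cX2: "card X2 = a - l" unfolding X2_def using J2A J2(2) fA2 ca2 by (simp add: card_Diff_subset finite_subset)
  have la: "l \<le> a" using J1A J1(2) fA1 a_def card_mono by blast
  have ppQ: "\<And>X. X \<subseteq> {..<n} \<Longrightarrow> X \<inter> I = {} \<Longrightarrow> pp n X \<inter> Q = {} \<and> pp n X \<inter> Q' = {}"
    using QQ'2 ppI_disj[OF _ In] by blast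
  have eA: "S1 - pp n J1 = pp n X1 \<union> Q"
  proof -
    have "S1 = pp n A1 \<union> Q" using S_decomp[OF S1] A1_def Q_def by simp
    moreover have "pp n J1 \<inter> Q = {}" using ppQ[OF J1n] J1A IA1 by blast
    ultimately show ?thesis unfolding X1_def pp_Diff[OF A1n J1n] by blast
  qed
  have eB: "swp' n S2 - pp n J2 = pp n X2 \<union> Q'"
  proof -
    have "S2 = pp n A2 \<union> Q" using S_decomp[OF S2] A2_def Q_def QQ by simp
    then have "swp' n S2 = pp n A2 \<union> Q'" unfolding Q'_def by (simp add: swp'_Un swp'_pp[OF A2n])
    moreover have "pp n J2 \<inter> Q' = {}" using ppQ[OF J2n] J2A IA2 by blast
    ultimately show ?thesis unfolding X2_def pp_Diff[OF A2n J2n] by blast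
  qed
  have dX1: "pp n X1 \<inter> Q = {} \<and> pp n X1 \<inter> Q' = {}" using ppQ[OF X1n] IA1 X1_def by blast
  have dX2: "pp n X2 \<inter> Q = {} \<and> pp n X2 \<inter> Q' = {}" using ppQ[OF X2n] IA2 X2_def by blast
  have disj_iff: "(pp n X1 \<union> Q) \<inter> (pp n X2 \<union> Q') = {} \<longleftrightarrow> X1 \<inter> X2 = {}"
  proof
    assume h: "(pp n X1 \<union> Q) \<inter> (pp n X2 \<union> Q') = {}"
    show "X1 \<inter> X2 = {}"
    proof (rule ccontr)
      assume "X1 \<inter> X2 \<noteq> {}"
      then obtain j where "j \<in> X1" "j \<in> X2" by blast
      then have "j \<in> pp n X1" "j \<in> pp n X2" by (auto simp: pp_def)
      then show False using h by blast
    qed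
  next
    assume h: "X1 \<inter> X2 = {}"
    show "(pp n X1 \<union> Q) \<inter> (pp n X2 \<union> Q') = {}"
      using ppI_disj[OF X1n X2n h] dX1 dX2 QQ'1 by blast
  qed
  have XA: "X1 = pairs n S1 - J1" "X2 = pairs n S2 - J2" using X1_def X2_def A1_def A2_def by auto
  show ?thesis
  proof (cases "X1 \<inter> X2 = {}")
    case False
    then show ?thesis unfolding Psi_def Let_def eA eB disj_iff XA[symmetric] by simp
  next
    case True
    define J3 where "J3 = {..<n} - (X1 \<union> X2 \<union> I)"
    have J3n: "J3 \<subseteq> {..<n}" using J3_def by auto
    have eL: "letters n - (pp n X1 \<union> Q \<union> (pp n X2 \<union> Q')) = pp n J3"
    proof -
      have "pp n X1 \<union> Q \<union> (pp n X2 \<union> Q') = pp n (X1 \<union> X2 \<union> I)"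
        using QQ'2 by (auto simp: pp_Un)
      then show ?thesis unfolding J3_def pp_letters_eq[symmetric]
        using pp_Diff[of "{..<n}" n "X1 \<union> X2 \<union> I"] X1n X2n In by simp
    qed
    have cU: "card (X1 \<union> X2 \<union> I) = (a - l) + (a - l) + q"
    proof -
      have f: "finite X1" "finite X2" "finite I" using X1n X2n In by (auto dest: fin_sub)
      have "card (X1 \<union> X2 \<union> I) = card (X1 \<union> X2) + card I"
        using f IA1 IA2 X1_def X2_def by (intro card_Un_disjoint) auto
      also have "card (X1 \<union> X2) = card X1 + card X2" using f True by (intro card_Un_disjoint) auto
      finally show ?thesis using cX1 cX2 cq by simp
    qed
    have cU_le: "card (X1 \<union> X2 \<union> I) \<le> n"
      using card_mono[of "{..<n}" "X1 \<union> X2 \<union> I"] X1n X2n In by auto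
    have cJ3: "card J3 = n - q - 2 * (a - l)"
    proof -
      have f: "finite X1" "finite X2" "finite I" using X1n X2n In by (auto dest: fin_sub)
      then show ?thesis
        unfolding J3_def using card_Diff_subset[of "X1 \<union> X2 \<union> I" "{..<n}"] X1n X2n In cU by (simp add: mult_2 diff_diff_left add.commute add.left_commute)
    qed
    have kk: "k = q + 2 * a" using card_decomp[OF S1] c1 q_def Q_def a_def A1_def by simp
    have eint: "int n - int k + 2 * int l = int (card J3)" using cJ3 cU cU_le kk la by simp
    have om: "omega_pow n (int n - int k + 2 * int l) (pp n J3) = cOm (card J3)"
    proof -
      have "card J3 \<le> n" using cJ3 by simp
      moreover have "ispp n (card J3) (pp n J3)" unfolding ispp_def using J3n by blast
      ultimately show ?thesis unfolding eint by (simp add: omega_pow_formula)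
    qed
    have sgn: "sg (pp n X1 \<union> Q) (pp n X2 \<union> Q') * sg (pp n X1 \<union> Q \<union> (pp n X2 \<union> Q')) (pp n J3) *
         sg (pp n J1) (pp n X1 \<union> Q) * sg (pp n J2) (pp n X2 \<union> Q')
       = (-1) ^ (a - l) * (sg (pp n (X1 \<union> J1)) Q' * sg (pp n (X2 \<union> J2)) Q * sg Q Q' * (-1) ^ ((n - q) * q))"
    proof (rule sign_lemma[OF X1n X2n J1n J2n J3n In])
      show "X1 \<inter> J1 = {}" "X2 \<inter> J2 = {}" "X1 \<inter> X2 = {}" "J3 \<inter> X1 = {}" "J3 \<inter> X2 = {}"
        "X1 \<inter> I = {}" "X2 \<inter> I = {}" "J1 \<inter> I = {}" "J2 \<inter> I = {}" "J3 \<inter> I = {}"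
        using True IA1 IA2 J1A J2A unfolding X1_def X2_def J3_def by auto
      show "Q \<inter> Q' = {}" "Q \<union> Q' = pp n I" using QQ'1 QQ'2 .
      show "card X1 = a - l" "card X2 = a - l" "card J1 = l" "card J2 = l" "card I = q" using cX1 cX2 J1 J2 cq by auto
      show "card J3 + 2 * (a - l) + q = n" using cJ3 cU cU_le by simp
    qed
    have U1: "X1 \<union> J1 = pairs n S1" using X1_def J1A A1_def by auto
    have U2: "X2 \<union> J2 = pairs n S2" using X2_def J2A A2_def by auto
    show ?thesis
      unfolding Psi_def Let_def eA eB eL om
      using True sgn[unfolded U1 U2] disj_iff XA cJ3
      by (simp add: U1 U2 GG_def Q_def[symmetric] Q'_def[symmetric] q_def[symmetric] a_def[symmetric] A1_def[symmetric])
  qed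
qed


lemma inv_shift: "inv ((\<lambda>x. x + n) ` X) ((\<lambda>x. x + n) ` Y) = inv X Y"
proof -
  have "{(a,b). a \<in> (\<lambda>x. x + n) ` X \<and> b \<in> (\<lambda>x. x + n) ` Y \<and> b < a} =
        (\<lambda>(a,b). (a + n, b + n)) ` {(a,b). a \<in> X \<and> b \<in> Y \<and> b < a}" by auto
  moreover have "inj (\<lambda>(a::nat,b::nat). (a + n, b + n))" by (auto simp: inj_def)
  ultimately show ?thesis unfolding inv_def by (simp add: card_image inj_on_subset[of _ UNIV])
qed

lemma inv_all: "finite A \<Longrightarrow> finite B \<Longrightarrow> (\<And>x y. x \<in> A \<Longrightarrow> y \<in> B \<Longrightarrow> y < x) \<Longrightarrow> inv A B = card A * card B"
proof -
  assume a: "finite A" "finite B" "\<And>x y. x \<in> A \<Longrightarrow> y \<in> B \<Longrightarrow> y < x"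
  then have "{(x,y). x \<in> A \<and> y \<in> B \<and> y < x} = A \<times> B" by auto
  then show ?thesis unfolding inv_def by (simp add: card_cartesian_product)
qed

lemma inv_none: "(\<And>x y. x \<in> A \<Longrightarrow> y \<in> B \<Longrightarrow> \<not> y < x) \<Longrightarrow> inv A B = 0"
proof -
  assume a: "\<And>x y. x \<in> A \<Longrightarrow> y \<in> B \<Longrightarrow> \<not> y < x"
  have "{(x,y). x \<in> A \<and> y \<in> B \<and> y < x} = {}" using a by blast
  then show ?thesis unfolding inv_def by (simp only: card.empty)
qed

lemma powi_i: "\<i> powi (int h - int t) = \<i> ^ h * (-\<i>) ^ t"
proof -
  have "\<i> powi (int h - int t) = \<i> powi int h / \<i> powi int t" by (simp add: power_int_diff)
  also have "\<dots> = \<i> ^ h / \<i> ^ t" by simp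
  also have "\<dots> = \<i> ^ h * (-\<i>) ^ t"
    by (simp add: divide_inverse power_inverse[symmetric])
  finally show ?thesis .
qed

lemma cOm_Suc: "cOm (Suc m) = (\<i>/2) * (-1) ^ m * cOm m"
proof -
  have "Suc m * (Suc m - 1) div 2 = m * (m - 1) div 2 + m" by (cases m) (auto simp: algebra_simps)
  then show ?thesis by (simp add: cOm_def power_add)
qed

lemma cOm_add: "cOm (m + q) = cOm m * (\<i>/2) ^ q * (-1) ^ (m * q + q * (q - 1) div 2)"
proof (induction q)
  case 0 then show ?case by simp
next
  case (Suc q)
  have e: "m * Suc q + Suc q * (Suc q - 1) div 2 = (m * q + q * (q - 1) div 2) + (m + q)"
  proof -
    have "Suc q * (Suc q - 1) div 2 = q * (q - 1) div 2 + q" by (cases q) (auto simp: algebra_simps)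
    then show ?thesis by simp
  qed
  have "cOm (m + Suc q) = (\<i>/2) * (-1) ^ (m + q) * cOm (m + q)" by (simp add: cOm_Suc)
  also have "\<dots> = cOm m * (\<i>/2) ^ Suc q * (-1) ^ (m * Suc q + Suc q * (Suc q - 1) div 2)"
    unfolding Suc e by (simp add: power_add)
  finally show ?case .
qed

lemma final_const:
  assumes S: "S \<subseteq> letters n" and c: "card S = k"
  shows "Ef n S * ((-4) ^ card (pairs n S) * GG n S S * cOm (n - card (sing n S)) * (-1) ^ card (pairs n S))
     = (-1) ^ (k * (k + 1) div 2) * 2 ^ k * cOm n"
proof -
  define Q where "Q = sing n S"
  define Q' where "Q' = swp' n Q"
  define A where "A = pairs n S"
  define I where "I = idx n Q"
  define H where "H = Q \<inter> {..<n}"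
  define T where "T = Q \<inter> {n..<2*n}"
  define T0 where "T0 = (\<lambda>x. x - n) ` T"
  define a where "a = card A"
  define q where "q = card Q"
  define h where "h = card H"
  define t where "t = card T"
  define m where "m = n - q"
  have QL: "Q \<subseteq> letters n" using S sing_sub Q_def by blast
  have fQ: "finite Q" using QL by (rule finite_subset) simp
  have An: "A \<subseteq> {..<n}" using pairs_sub A_def by blast
  have In: "I \<subseteq> {..<n}" using idx_sub I_def by blast
  have fA: "finite A" using An by (rule fin_sub)
  have cI: "card I = q" using card_idx_sing[OF S] I_def q_def Q_def by simp
  have qn: "q \<le> n" using card_mono[OF _ In] cI by simp
  have IA: "A \<inter> I = {}" using idx_sing_pairs[OF S] A_def I_def Q_def by auto
  have QQ'1: "Q \<inter> Q' = {}" using sing_swp_disj[OF S] Q'_def Q_def by simp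
  have QQ'2: "Q \<union> Q' = pp n I" using sing_swp_union[OF S] Q'_def Q_def I_def by simp
  have memQ: "\<And>x. x \<in> Q \<Longrightarrow> x \<in> S \<and> swp n x \<notin> S" using mem_sing[OF S] Q_def by blast
  have QHT: "Q = H \<union> T" using QL by (auto simp: H_def T_def letters_def)
  have HT: "H \<inter> T = {}" by (auto simp: H_def T_def)
  have fH: "finite H" "finite T" using fQ by (auto simp: H_def T_def)
  have qht: "q = h + t" unfolding q_def h_def t_def QHT using card_Un_disjoint[OF fH HT] .
  have T_eq: "T = (\<lambda>x. x + n) ` T0" unfolding T0_def image_image by (auto simp: T_def image_iff)
  have injT: "inj_on (\<lambda>x. x - n) T" by (auto simp: inj_on_def T_def)
  have cT0: "card T0 = t" unfolding T0_def t_def using card_image[OF injT] .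
  have fT0: "finite T0" using fH(2) T0_def by simp
  have T0n: "\<And>x. x \<in> T0 \<Longrightarrow> x < n" by (auto simp: T0_def T_def)
  have Q'_eq: "Q' = (\<lambda>x. x + n) ` H \<union> T0"
    unfolding Q'_def swp'_def QHT T0_def by (auto simp: H_def T_def swp_def image_Un add.commute intro!: image_cong)
  have HT0: "H \<inter> T0 = {}"
  proof (rule ccontr)
    assume "H \<inter> T0 \<noteq> {}"
    then obtain x where x: "x \<in> H" "x \<in> T0" by blast
    have "x + n \<in> T" using x(2) unfolding T_eq by (rule imageI)
    then have xnQ: "x + n \<in> Q" unfolding QHT by (rule UnI2)
    have xQ: "x \<in> Q" using x(1) unfolding QHT by (rule UnI1)
    have sw: "swp n x = x + n" using x(1) by (simp add: H_def swp_def)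
    have "x + n \<in> S" using memQ[OF xnQ] by (rule conjunct1)
    moreover have "swp n x \<notin> S" using memQ[OF xQ] by (rule conjunct2)
    ultimately show False using sw by simp
  qed
  have inv_QQ': "inv Q Q' = h * t + t * t"
  proof -
    let ?H' = "(\<lambda>x. x + n) ` H"
    have f': "finite ?H'" using fH(1) by simp
    have d': "?H' \<inter> T0 = {}" using T0n by auto
    have s1: "inv (H \<union> T) (?H' \<union> T0) = inv H (?H' \<union> T0) + inv T (?H' \<union> T0)"
      by (rule inv_union_left) (use f' fT0 fH HT in auto)
    have s2: "inv H (?H' \<union> T0) = inv H ?H' + inv H T0"
      by (rule inv_union_right) (use f' fT0 fH d' in auto)
    have s3: "inv T (?H' \<union> T0) = inv T ?H' + inv T T0"
      by (rule inv_union_right) (use f' fT0 fH d' in auto)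
    have z: "inv H ?H' = 0"
    proof (rule inv_none)
      fix x y assume "x \<in> H" "y \<in> ?H'"
      then have "x < n" "n \<le> y" by (auto simp: H_def)
      then show "\<not> y < x" by simp
    qed
    have tt: "inv T T0 = t * t"
    proof -
      have "inv T T0 = card T * card T0"
      proof (rule inv_all[OF fH(2) fT0])
        fix x y assume "x \<in> T" "y \<in> T0"
        then have "n \<le> x" "y < n" using T0n by (auto simp: T_def)
        then show "y < x" by simp
      qed
      then show ?thesis using cT0 t_def by simp
    qed
    have sh: "inv T ?H' = inv T0 H" unfolding T_eq by (rule inv_shift)
    have sw: "inv H T0 + inv T0 H = h * t" using inv_swap[OF fH(1) fT0 HT0] cT0 h_def by simp
    have "inv Q Q' = inv (H \<union> T) (?H' \<union> T0)" unfolding QHT Q'_eq ..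
    also have "\<dots> = h * t + t * t" unfolding s1 s2 s3 z tt sh using sw by simp
    finally show ?thesis .
  qed
  have sQQ': "sg Q Q' = (-1) ^ (h * t + t * t)" unfolding sg_def inv_QQ' ..
  have sA: "sg (pp n A) Q' * sg (pp n A) Q = (-1) ^ (a * q)"
    using sg_pp_QQ'[OF An In IA QQ'1 QQ'2] cI a_def by (simp add: mult.commute)
  have GG_eq: "GG n S S = (-1) ^ (a * q) * (-1) ^ (h * t + t * t) * (-1) ^ (m * q)"
    unfolding GG_def using sA sQQ' by (simp add: Q_def[symmetric] Q'_def[symmetric] A_def[symmetric] q_def[symmetric] m_def)
  have SAQ: "S = pp n A \<union> Q" using S_decomp[OF S] A_def Q_def by simp
  have AQ: "A \<inter> Q = {}"
  proof (rule ccontr)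
    assume "A \<inter> Q \<noteq> {}"
    then obtain x where x: "x \<in> A" "x \<in> Q" by blast
    then have "x < n" "n + x \<in> S" using A_def by (auto simp: pairs_def)
    then show False using memQ[OF x(2)] by (simp add: swp_def add.commute)
  qed
  have holS: "hol n S = a + h"
  proof -
    have "S \<inter> {..<n} = A \<union> H" unfolding SAQ H_def using An by (auto simp: pp_def)
    moreover have "A \<inter> H = {}" using AQ H_def by auto
    ultimately show ?thesis unfolding hol_def a_def h_def using fA fH by (simp add: card_Un_disjoint)
  qed
  have antS: "ant n S = a + t"
  proof -
    have "S \<inter> {n..<2*n} = (\<lambda>x. x + n) ` A \<union> T" unfolding SAQ T_def using An by (auto simp: pp_def add.commute)
    moreover have "(\<lambda>x. x + n) ` A \<inter> T = {}"
    proof (rule ccontr)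
      assume "(\<lambda>x. x + n) ` A \<inter> T \<noteq> {}"
      then obtain x where x: "x \<in> A" "x + n \<in> Q" using T_def by auto
      then have "x < n" "x \<in> S" using A_def by (auto simp: pairs_def)
      then show False using memQ[OF x(2)] by (simp add: swp_def)
    qed
    moreover have "card ((\<lambda>x. x + n) ` A) = a" using a_def by (simp add: card_image inj_on_def)
    ultimately show ?thesis unfolding ant_def t_def using fA fH by (simp add: card_Un_disjoint)
  qed
  have Ef_eq: "Ef n S = (-1) ^ ((a + h) * (a + t)) * ((-\<i>) ^ h * \<i> ^ t)"
  proof -
    have e: "int (a + h) - int (a + t) = int h - int t" by simp
    have "cnj (\<i> ^ h * (-\<i>) ^ t) = (-\<i>) ^ h * \<i> ^ t" by simp
    then show ?thesis unfolding Ef_def holS antS e powi_i by simp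
  qed
  have kq: "k = q + 2 * a" using card_decomp[OF S] c q_def Q_def a_def A_def by simp
  define D where "D = q * (q - 1) div 2"
  have kdiv: "k * (k + 1) div 2 = D + q + a * (2 * q + 1) + 2 * a * a"
  proof -
    have t1: "q * (q + 1) div 2 = D + q" unfolding D_def by (cases q) (auto simp: algebra_simps)
    have "k * (k + 1) = q * (q + 1) + 2 * (a * (2 * q + 1) + 2 * a * a)" unfolding kq by (simp add: algebra_simps)
    then have "k * (k + 1) div 2 = q * (q + 1) div 2 + (a * (2 * q + 1) + 2 * a * a)" by simp
    then show ?thesis using t1 by simp
  qed
  have cOm_n: "cOm n = cOm m * (\<i>/2) ^ q * (-1) ^ (m * q + D)"
    using cOm_add[of m q] qn unfolding m_def D_def by simp
  have E: "(-1::complex) ^ ((a + h) * (a + t) + h + a + a * q + (h * t + t * t) + m * q + a) =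
       (-1) ^ (D + q + a * (2 * q + 1) + 2 * a * a + (m * q + D))"
  proof (rule neg1_cong)
    have eqn: "(a + h) * (a + t) + h + a + a * q + (h * t + t * t) + m * q + a + (D + q + a * (2 * q + 1) + 2 * a * a + (m * q + D))
       = (a * a + a) + (t * t + t) + 2 * (a * a + a + 2 * a * t + 2 * a * h + h * t + h + m * q + D)"
      unfolding qht by (simp add: algebra_simps)
    have ev1: "even (a * a + a)" and ev2: "even (t * t + t)" by auto
    show "even ((a + h) * (a + t) + h + a + a * q + (h * t + t * t) + m * q + a + (D + q + a * (2 * q + 1) + 2 * a * a + (m * q + D)))"
      unfolding eqn using ev1 ev2 by simp
  qed
  have i2: "(\<i>/2) ^ q * 2 ^ q = \<i> ^ h * \<i> ^ t"
  proof -
    have "(\<i>/2) ^ q * 2 ^ q = ((\<i>/2) * 2) ^ q" by (simp only: power_mult_distrib)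
    also have "\<dots> = \<i> ^ q" by simp
    also have "\<dots> = \<i> ^ h * \<i> ^ t" unfolding qht by (rule power_add)
    finally show ?thesis .
  qed
  have mh: "(-\<i>::complex) ^ h = (-1) ^ h * \<i> ^ h" unfolding power_mult_distrib[symmetric] by simp
  have m4: "(-4::complex) ^ a = (-1) ^ a * 4 ^ a" unfolding power_mult_distrib[symmetric] by simp
  have LHS: "Ef n S * ((-4) ^ a * GG n S S * cOm m * (-1) ^ a) =
      (-1) ^ ((a + h) * (a + t) + h + a + a * q + (h * t + t * t) + m * q + a) * (\<i> ^ h * \<i> ^ t * 4 ^ a * cOm m)"
    unfolding Ef_eq GG_eq mh m4 by (simp only: power_add mult_ac)
  have k2: "(2::complex) ^ k = 2 ^ q * 4 ^ a" unfolding kq by (simp add: power_add power_mult)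
  have RHS: "(-1) ^ (k * (k + 1) div 2) * 2 ^ k * cOm n =
      (-1) ^ (D + q + a * (2 * q + 1) + 2 * a * a + (m * q + D)) * (\<i> ^ h * \<i> ^ t * 4 ^ a * cOm m)"
  proof -
    have "(-1) ^ (k * (k + 1) div 2) * 2 ^ k * cOm n =
       ((-1) ^ (D + q + a * (2 * q + 1) + 2 * a * a) * (-1) ^ (m * q + D)) * ((\<i>/2) ^ q * 2 ^ q) * (4 ^ a * cOm m)"
      unfolding kdiv k2 cOm_n by (simp only: mult_ac)
    also have "\<dots> = (-1) ^ (D + q + a * (2 * q + 1) + 2 * a * a + (m * q + D)) * (\<i> ^ h * \<i> ^ t * 4 ^ a * cOm m)"
      unfolding i2 power_add[of "-1::complex" "D + q + a * (2 * q + 1) + 2 * a * a" "m * q + D"]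
      by (simp only: mult_ac)
    finally show ?thesis .
  qed
  have g1: "card (pairs n S) = a" using a_def A_def by simp
  have g2: "n - card (sing n S) = m" using m_def q_def Q_def by simp
  show ?thesis unfolding g1 g2 by (simp only: LHS E RHS)
qed


lemma omega_pow_nz:
  assumes "omega_pow n z R \<noteq> 0"
  shows "\<exists>J. J \<subseteq> {..<n} \<and> R = pp n J \<and> z = int (card J) \<and> card J \<le> n"
proof -
  have z: "0 \<le> z" "z \<le> int n" using assms by (auto simp: omega_pow_def split: if_splits)
  then obtain m where m: "z = int m" "m \<le> n" by (metis nonneg_int_cases of_nat_le_iff)
  then have "ispp n m R" using assms omega_pow_formula[of m n R] by (auto split: if_splits)
  then show ?thesis unfolding ispp_def using m by blast
qed

lemma omega_pow_nz_card:
  assumes "omega_pow n z R \<noteq> 0"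
  shows "0 \<le> z \<and> z \<le> int n \<and> card R = 2 * nat z \<and> R \<subseteq> letters n"
  using omega_pow_nz[OF assms] card_pp pp_sub_letters by force

lemma psi_zero:
  assumes S1: "S1 \<subseteq> letters n" and S2: "S2 \<subseteq> letters n" and ne: "sing n S1 \<noteq> sing n S2"
    and J1: "J1 \<subseteq> pairs n S1" and J2: "J2 \<subseteq> pairs n S2"
  shows "Psi n k l S1 S2 J1 J2 = 0"
proof (rule ccontr)
  assume h: "Psi n k l S1 S2 J1 J2 \<noteq> 0"
  let ?A = "S1 - pp n J1" and ?B = "swp' n S2 - pp n J2"
  have AB: "?A \<inter> ?B = {}" and om: "omega_pow n (int n - int k + 2 * int l) (letters n - (?A \<union> ?B)) \<noteq> 0"
    using h unfolding Psi_def Let_def by (auto split: if_splits)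
  obtain J3 where J3: "J3 \<subseteq> {..<n}" "letters n - (?A \<union> ?B) = pp n J3" using omega_pow_nz[OF om] by blast
  have "letters n - ?A - ?B = pp n J3" using J3(2) by (simp add: Diff_Un set_diff_eq)
  then have "sing n S1 = sing n S2" using config_sing[OF S1 S2 J1 J2 AB J3(1)] by blast
  then show False using ne by simp
qed

lemma cOm_shift: "cOm (m + 2 * d) * 4 ^ d = cOm m"
proof (induction d)
  case 0 then show ?case by simp
next
  case (Suc d)
  have "cOm (m + 2 * Suc d) = cOm (Suc (Suc (m + 2 * d)))" by simp
  also have "\<dots> = (\<i>/2) * (-1) ^ Suc (m + 2*d) * ((\<i>/2) * (-1) ^ (m + 2*d) * cOm (m + 2*d))"
    by (simp only: cOm_Suc)
  also have "\<dots> = cOm (m + 2*d) / 4"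
    by (simp add: power2_eq_square field_simps flip: power_add)
  finally have h: "cOm (m + 2 * Suc d) = cOm (m + 2*d) / 4" .
  have "cOm (m + 2 * Suc d) * 4 ^ Suc d = (cOm (m + 2*d) / 4) * (4 * 4^d)" using h by simp
  also have "\<dots> = cOm (m + 2*d) * 4^d" by simp
  also have "\<dots> = cOm m" by (rule Suc.IH)
  finally show ?case .
qed

definition PJ :: "nat \<Rightarrow> nat \<Rightarrow> nat set \<Rightarrow> nat set set" where
  "PJ n l S = {J. J \<subseteq> pairs n S \<and> card J = l}"

lemma cL_sq: "cL l * cL l = (-4) ^ l"
proof -
  have 1: "(-2*\<i>::complex)^l * (-2*\<i>)^l = (-4)^l"
    by (simp add: power_mult_distrib[symmetric])
  have 2: "(-1::complex)^x * (-1)^x = 1" for x by (simp flip: power_add)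
  have "cL l * cL l = ((-2*\<i>)^l * (-2*\<i>)^l) * ((-1) ^ (l * (l - 1) div 2) * (-1) ^ (l * (l - 1) div 2))"
    by (simp add: cL_def algebra_simps)
  then show ?thesis unfolding 1 2 by simp
qed

lemma key:
  fixes b :: "nat \<Rightarrow> int"
  assumes b0: "b 0 = 1" and brec: "\<forall>p\<ge>1. (\<Sum>l=0..p. (-1) ^ l * int (p choose l) ^ 2 * b l) = 0"
    and S1: "S1 \<subseteq> letters n" and S2: "S2 \<subseteq> letters n" and c1: "card S1 = k" and c2: "card S2 = k"
  shows "Ef n S2 * (\<Sum>l=0..n. (-1) ^ l * of_int (b l) * (cL l * cL l) *
            (\<Sum>J1\<in>PJ n l S1. \<Sum>J2\<in>PJ n l S2. Psi n k l S1 S2 J1 J2))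
       = (if S1 = S2 then (-1) ^ (k * (k + 1) div 2) * 2 ^ k * cOm n else 0)"
proof (cases "sing n S1 = sing n S2")
  case False
  have "S1 \<noteq> S2" using False by auto
  moreover have "(\<Sum>J1\<in>PJ n l S1. \<Sum>J2\<in>PJ n l S2. Psi n k l S1 S2 J1 J2) = 0" for l
    by (intro sum.neutral ballI) (auto simp: PJ_def psi_zero[OF S1 S2 False])
  ultimately show ?thesis by simp
next
  case True
  define Q where "Q = sing n S1"
  define A1 where "A1 = pairs n S1"
  define A2 where "A2 = pairs n S2"
  define a where "a = card A1"
  define q where "q = card Q"
  define C where "C = (-4) ^ a * GG n S1 S2 * cOm (n - q)"
  have fA1: "finite A1" and fA2: "finite A2" using pairs_sub fin_sub A1_def A2_def by metis+
  have ca2: "card A2 = a"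
    using card_decomp[OF S1] card_decomp[OF S2] c1 c2 True unfolding a_def A1_def A2_def by simp
  have an: "a \<le> n" using card_mono[OF _ pairs_sub] a_def A1_def by (metis card_lessThan finite_lessThan)
  define N where "N l = (\<Sum>J1\<in>{J. J \<subseteq> A1 \<and> card J = l}. \<Sum>J2\<in>{J. J \<subseteq> A2 \<and> card J = l}.
            (if (A1 - J1) \<inter> (A2 - J2) = {} then 1 else 0::int))" for l
  have termeq: "(-1) ^ l * of_int (b l) * (cL l * cL l) * (\<Sum>J1\<in>PJ n l S1. \<Sum>J2\<in>PJ n l S2. Psi n k l S1 S2 J1 J2)
      = C * of_int ((-1) ^ l * b l * N l)" for l
  proof (cases "l \<le> a")
    case False
    have "PJ n l S1 = {}" unfolding PJ_def using False fA1 a_def A1_def card_mono by fastforce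
    moreover have "{J. J \<subseteq> A1 \<and> card J = l} = {}" using False fA1 a_def card_mono by fastforce
    then have "N l = 0" unfolding N_def by (simp only: sum.empty)
    ultimately show ?thesis by simp
  next
    case le: True
    have inner: "(\<Sum>J1\<in>PJ n l S1. \<Sum>J2\<in>PJ n l S2. Psi n k l S1 S2 J1 J2) =
        (-1) ^ (a - l) * GG n S1 S2 * cOm (n - q - 2 * (a - l)) * of_int (N l)"
    proof -
      have "(\<Sum>J1\<in>PJ n l S1. \<Sum>J2\<in>PJ n l S2. Psi n k l S1 S2 J1 J2) =
        (\<Sum>J1\<in>PJ n l S1. \<Sum>J2\<in>PJ n l S2. (-1) ^ (a - l) * GG n S1 S2 * cOm (n - q - 2 * (a - l)) *
            (if (A1 - J1) \<inter> (A2 - J2) = {} then 1 else 0))"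
        by (intro sum.cong refl) (auto simp: PJ_def psi_val[OF S1 S2 True c1 c2] A1_def A2_def a_def q_def Q_def)
      also have "\<dots> = (-1) ^ (a - l) * GG n S1 S2 * cOm (n - q - 2 * (a - l)) * of_int (N l)"
        by (simp add: N_def PJ_def A1_def A2_def sum_distrib_left of_int_sum if_distrib cong: if_cong)
      finally show ?thesis .
    qed
    show ?thesis
    proof (cases "N l = 0")
      case True then show ?thesis unfolding inner by simp
    next
      case False
      have "\<exists>J1\<in>{J. J \<subseteq> A1 \<and> card J = l}. \<exists>J2\<in>{J. J \<subseteq> A2 \<and> card J = l}. (A1 - J1) \<inter> (A2 - J2) = {}"
      proof (rule ccontr)
        assume "\<not> ?thesis"
        then have "N l = 0" unfolding N_def by (intro sum.neutral ballI) auto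
        then show False using False by simp
      qed
      then obtain J1 J2 where J: "J1 \<subseteq> A1" "card J1 = l" "J2 \<subseteq> A2" "card J2 = l" "(A1 - J1) \<inter> (A2 - J2) = {}"
        by blast
      have qn: "q + 2 * (a - l) \<le> n"
      proof -
        have "card (A1 - J1) = a - l" using J fA1 a_def by (simp add: card_Diff_subset finite_subset)
        moreover have "card (A2 - J2) = a - l" using J fA2 ca2 by (simp add: card_Diff_subset finite_subset)
        moreover have "card (idx n Q) = q" using card_idx_sing[OF S1] q_def Q_def by simp
        moreover have "idx n Q \<inter> A1 = {}" "idx n Q \<inter> A2 = {}"
          using idx_sing_pairs[OF S1] idx_sing_pairs[OF S2] True Q_def A1_def A2_def by auto
        moreover have "(A1 - J1) \<union> (A2 - J2) \<union> idx n Q \<subseteq> {..<n}"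
          using pairs_sub idx_sub A1_def A2_def by blast
        moreover have "finite (A1 - J1)" "finite (A2 - J2)" "finite (idx n Q)"
          using fA1 fA2 fin_sub[OF idx_sub] by auto
        ultimately have "card ((A1 - J1) \<union> (A2 - J2) \<union> idx n Q) = (a - l) + (a - l) + q"
          using J(5) card_Un_disjoint[of "A1 - J1" "A2 - J2"]
            card_Un_disjoint[of "(A1 - J1) \<union> (A2 - J2)" "idx n Q"] by auto
        moreover have "card ((A1 - J1) \<union> (A2 - J2) \<union> idx n Q) \<le> n"
          using card_mono[of "{..<n}" "(A1 - J1) \<union> (A2 - J2) \<union> idx n Q"] \<open>(A1 - J1) \<union> (A2 - J2) \<union> idx n Q \<subseteq> {..<n}\<close>
          by simp
        ultimately show ?thesis by simp
      qed
      have cO: "cOm (n - q - 2 * (a - l)) = cOm (n - q) * 4 ^ (a - l)"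
        using cOm_shift[of "n - q - 2 * (a - l)" "a - l"] qn by simp
      have sgn: "(-1::complex) ^ l * (-4) ^ l * ((-1) ^ (a - l) * 4 ^ (a - l)) = (-1) ^ l * (-4) ^ a"
      proof -
        have "(-1::complex) ^ l * (-4) ^ l * ((-1) ^ (a - l) * 4 ^ (a - l)) = (-4) ^ l * (-4) ^ (a - l) * (-1) ^ l"
          by (simp add: power_mult_distrib[symmetric] algebra_simps)
        also have "\<dots> = (-4) ^ a * (-1) ^ l" using le by (simp flip: power_add)
        finally show ?thesis by simp
      qed
      have "(-1) ^ l * of_int (b l) * (cL l * cL l) * (\<Sum>J1\<in>PJ n l S1. \<Sum>J2\<in>PJ n l S2. Psi n k l S1 S2 J1 J2)
          = ((-1::complex) ^ l * (-4) ^ l * ((-1) ^ (a - l) * 4 ^ (a - l))) * (of_int (b l) * GG n S1 S2 * cOm (n - q) * of_int (N l))"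
        unfolding inner cO cL_sq by (simp only: mult_ac)
      also have "\<dots> = ((-1) ^ l * (-4) ^ a) * (of_int (b l) * GG n S1 S2 * cOm (n - q) * of_int (N l))"
        unfolding sgn ..
      also have "\<dots> = C * of_int ((-1) ^ l * b l * N l)" by (simp add: C_def mult_ac)
      finally show ?thesis .
    qed
  qed
  have "(\<Sum>l=0..n. (-1) ^ l * of_int (b l) * (cL l * cL l) *
            (\<Sum>J1\<in>PJ n l S1. \<Sum>J2\<in>PJ n l S2. Psi n k l S1 S2 J1 J2))
       = C * of_int (\<Sum>l=0..n. (-1) ^ l * b l * N l)"
    unfolding termeq by (simp add: sum_distrib_left)
  also have "\<dots> = C * (if A1 = A2 then (-1) ^ a else 0)"
    unfolding N_def using comb_lemma[OF b0 brec fA1 fA2 a_def[symmetric] ca2 an] by simp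
  finally have e: "(\<Sum>l=0..n. (-1) ^ l * of_int (b l) * (cL l * cL l) *
            (\<Sum>J1\<in>PJ n l S1. \<Sum>J2\<in>PJ n l S2. Psi n k l S1 S2 J1 J2)) = C * (if A1 = A2 then (-1) ^ a else 0)" .
  have eqS: "S1 = S2 \<longleftrightarrow> A1 = A2"
    using S_decomp[OF S1] S_decomp[OF S2] True A1_def A2_def by metis
  show ?thesis
  proof (cases "S1 = S2")
    case False then show ?thesis using e eqS by simp
  next
    case True2: True
    show ?thesis unfolding e using True2 eqS final_const[OF S2 c2]
      by (simp add: C_def a_def A1_def q_def Q_def algebra_simps)
  qed
qed


lemma finite_Pow_letters[simp]: "finite (Pow (letters n))" by simp

lemma finite_FJ[simp]: "finite (FJ n l A)"
  unfolding FJ_def by (rule finite_subset[of _ "Pow (free n A)"]) auto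

lemma finite_PJ[simp]: "finite (PJ n l S)"
  unfolding PJ_def by (rule finite_subset[of _ "Pow (pairs n S)"]) (auto intro: fin_sub[OF pairs_sub])

lemma reindexR:
  fixes h :: "nat set \<Rightarrow> nat set \<Rightarrow> complex"
  shows "(\<Sum>A\<in>Pow (letters n). \<Sum>J\<in>FJ n l A. h A J) = (\<Sum>S\<in>Pow (letters n). \<Sum>J\<in>PJ n l S. h (S - pp n J) J)"
proof -
  have "(\<Sum>A\<in>Pow (letters n). \<Sum>J\<in>FJ n l A. h A J) = (\<Sum>(A,J)\<in>Sigma (Pow (letters n)) (FJ n l). h A J)"
    by (rule sum.Sigma) auto
  also have "\<dots> = (\<Sum>(S,J)\<in>Sigma (Pow (letters n)) (PJ n l). h (S - pp n J) J)"
  proof (rule sum.reindex_bij_witness[where i = "\<lambda>(S,J). (S - pp n J, J)" and j = "\<lambda>(A,J). (A \<union> pp n J, J)"])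
    fix x assume "x \<in> Sigma (Pow (letters n)) (FJ n l)"
    then obtain A J where x: "x = (A,J)" "A \<subseteq> letters n" "J \<subseteq> free n A" "card J = l" by (auto simp: FJ_def)
    have Jn: "J \<subseteq> {..<n}" using x(3) free_sub by blast
    have d: "pp n J \<inter> A = {}" using pp_disj[OF x(3)] .
    show "(\<lambda>(S,J). (S - pp n J, J)) ((\<lambda>(A,J). (A \<union> pp n J, J)) x) = x" using x d by auto
    have "J \<subseteq> pairs n (A \<union> pp n J)" using Jn by (auto simp: pairs_def pp_def)
    then show "(\<lambda>(A,J). (A \<union> pp n J, J)) x \<in> Sigma (Pow (letters n)) (PJ n l)"
      using x pp_sub_letters[OF Jn] by (auto simp: PJ_def)
    show "(case (\<lambda>(A,J). (A \<union> pp n J, J)) x of (S,J) \<Rightarrow> h (S - pp n J) J) = (case x of (A,J) \<Rightarrow> h A J)"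
      using x d by (auto simp: Un_Diff Diff_triv Int_commute)
  next
    fix y assume "y \<in> Sigma (Pow (letters n)) (PJ n l)"
    then obtain S J where y: "y = (S,J)" "S \<subseteq> letters n" "J \<subseteq> pairs n S" "card J = l" by (auto simp: PJ_def)
    have "pp n J \<subseteq> S" using pp_mono[OF y(3)] pp_pairs_sub by blast
    then show "(\<lambda>(A,J). (A \<union> pp n J, J)) ((\<lambda>(S,J). (S - pp n J, J)) y) = y" using y by auto
    have "J \<subseteq> free n (S - pp n J)" using y(3) by (auto simp: free_def pairs_def pp_def pr_def)
    then show "(\<lambda>(S,J). (S - pp n J, J)) y \<in> Sigma (Pow (letters n)) (FJ n l)"
      using y by (auto simp: FJ_def)
  qed
  also have "\<dots> = (\<Sum>S\<in>Pow (letters n). \<Sum>J\<in>PJ n l S. h (S - pp n J) J)"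
    by (rule sum.Sigma[symmetric]) auto
  finally show ?thesis .
qed

lemma reindex_swp:
  fixes f :: "nat set \<Rightarrow> complex"
  shows "(\<Sum>T\<in>Pow (letters n). f T) = (\<Sum>S\<in>Pow (letters n). f (swp' n S))"
  by (rule sum.reindex_bij_witness[where i = "swp' n" and j = "swp' n"])
     (auto simp: swp'_swp' swp'_letters)

lemma stepA:
  fixes X Y Z :: form
  shows "wedge n (wedge n X Y) Z (letters n) = (\<Sum>A\<in>Pow (letters n). \<Sum>B\<in>Pow (letters n).
     if A \<inter> B = {} then sg A B * sg (A \<union> B) (letters n - (A \<union> B)) * X A * Y B * Z (letters n - (A \<union> B)) else 0)"
proof -
  let ?L = "letters n"
  let ?g = "\<lambda>A B. sg A B * sg (A \<union> B) (?L - (A \<union> B)) * X A * Y B * Z (?L - (A \<union> B))"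
  let ?D = "{(A,B). A \<subseteq> ?L \<and> B \<subseteq> ?L \<and> A \<inter> B = {}}"
  have "wedge n (wedge n X Y) Z ?L = (\<Sum>S\<in>Pow ?L. \<Sum>S'\<in>Pow S. sg S (?L - S) * (sg S' (S - S') * X S' * Y (S - S')) * Z (?L - S))"
    unfolding wedge_sg by (auto intro!: sum.cong simp: sum_distrib_left sum_distrib_right)
  also have "\<dots> = (\<Sum>(S,S')\<in>Sigma (Pow ?L) Pow. sg S (?L - S) * (sg S' (S - S') * X S' * Y (S - S')) * Z (?L - S))"
    by (rule sum.Sigma) (auto intro: finite_subset)
  also have "\<dots> = (\<Sum>(A,B)\<in>?D. ?g A B)"
  proof (rule sum.reindex_bij_witness[where i = "\<lambda>(A,B). (A \<union> B, A)" and j = "\<lambda>(S,S'). (S', S - S')"])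
    fix x assume "x \<in> Sigma (Pow ?L) Pow"
    then obtain S S' where x: "x = (S,S')" "S \<subseteq> ?L" "S' \<subseteq> S" by auto
    show "(\<lambda>(A,B). (A \<union> B, A)) ((\<lambda>(S,S'). (S', S - S')) x) = x" using x by auto
    show "(\<lambda>(S,S'). (S', S - S')) x \<in> ?D" using x by auto
    show "(case (\<lambda>(S,S'). (S', S - S')) x of (A,B) \<Rightarrow> ?g A B) =
        (case x of (S,S') \<Rightarrow> sg S (?L - S) * (sg S' (S - S') * X S' * Y (S - S')) * Z (?L - S))"
      using x by (simp add: Un_absorb1 algebra_simps)
  next
    fix y assume "y \<in> ?D"
    then obtain A B where y: "y = (A,B)" "A \<subseteq> ?L" "B \<subseteq> ?L" "A \<inter> B = {}" by auto
    show "(\<lambda>(S,S'). (S', S - S')) ((\<lambda>(A,B). (A \<union> B, A)) y) = y" using y by auto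
    show "(\<lambda>(A,B). (A \<union> B, A)) y \<in> Sigma (Pow ?L) Pow" using y by auto
  qed
  also have "\<dots> = (\<Sum>(A,B)\<in>Pow ?L \<times> Pow ?L. if A \<inter> B = {} then ?g A B else 0)"
    by (rule sum.mono_neutral_cong_left) (auto simp: disjoint_iff split: if_splits)
  also have "\<dots> = (\<Sum>A\<in>Pow ?L. \<Sum>B\<in>Pow ?L. if A \<inter> B = {} then ?g A B else 0)"
    by (rule sum.cartesian_product[symmetric])
  finally show ?thesis .
qed


lemma Lam_pow_support:
  assumes u: "is_kform n k u" and nz: "Lam_pow n l u T \<noteq> 0"
  shows "T \<subseteq> letters n \<and> card T + 2 * l = k"
proof -
  have uf: "is_form n u" using u by (simp add: is_kform_def)
  have T: "T \<subseteq> letters n"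
  proof (rule ccontr)
    assume "\<not> T \<subseteq> letters n"
    then have "Lam_pow n l u T = 0" using Lam_pow_formula[OF uf, of l T] by simp
    then show False using nz by simp
  qed
  have "(\<Sum>J\<in>FJ n l T. sg (pp n J) T * u (T \<union> pp n J)) \<noteq> 0"
  proof
    assume "(\<Sum>J\<in>FJ n l T. sg (pp n J) T * u (T \<union> pp n J)) = 0"
    then have "Lam_pow n l u T = 0" using Lam_pow_formula[OF uf, of l T] T by simp
    then show False using nz by simp
  qed
  then obtain J where J: "J \<in> FJ n l T" "sg (pp n J) T * u (T \<union> pp n J) \<noteq> 0"
    using sum.not_neutral_contains_not_neutral by blast
  have uJ: "u (T \<union> pp n J) \<noteq> 0" using J(2) by auto
  have Jf: "J \<subseteq> free n T" "card J = l" using J(1) unfolding FJ_def by auto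
  have Jn: "J \<subseteq> {..<n}" using Jf(1) free_sub by blast
  have fT: "finite T" using T by (rule finite_subset) simp
  have "card (T \<union> pp n J) = k" using uJ u unfolding is_kform_def by blast
  moreover have "card (T \<union> pp n J) = card T + 2 * l"
  proof -
    have "T \<inter> pp n J = {}" using pp_disj[OF Jf(1)] by blast
    then show ?thesis using card_Un_disjoint[of T "pp n J"] fT fin_sub[OF Jn] card_pp[OF Jn] Jf(2) by simp
  qed
  ultimately show ?thesis using T by simp
qed


lemma PJ_swp: "S \<subseteq> letters n \<Longrightarrow> PJ n l (swp' n S) = PJ n l S"
  by (simp add: PJ_def pairs_swp)

lemma omega_pow_top: "omega_pow n (int n) R = (if R = letters n then cOm n else 0)"
proof -
  have "ispp n n R \<longleftrightarrow> R = letters n"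
  proof
    assume "ispp n n R"
    then obtain J where J: "J \<subseteq> {..<n}" "card J = n" "R = pp n J" unfolding ispp_def by blast
    then have "J = {..<n}" by (metis card_lessThan card_subset_eq finite_lessThan)
    then show "R = letters n" using J pp_letters_eq by simp
  next
    assume "R = letters n"
    then show "ispp n n R" unfolding ispp_def using pp_letters_eq by (intro exI[of _ "{..<n}"]) auto
  qed
  then show ?thesis using omega_pow_formula[of n n R] by simp
qed

lemma wedge_chain:
  fixes u :: form and k l n :: nat
  assumes uf: "is_form n u"
  defines "w \<equiv> fconj n (Iop n u)"
  shows "wedge n (wedge n (Lam_pow n l u) (Lam_pow n l w)) (omega_pow n (int n - int k + 2 * int l)) (letters n)
   = cL l * cL l * (\<Sum>S1\<in>Pow (letters n). \<Sum>S2\<in>Pow (letters n). u S1 * cnj (u S2) * Ef n S2 *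
        (\<Sum>J1\<in>PJ n l S1. \<Sum>J2\<in>PJ n l S2. Psi n k l S1 S2 J1 J2))"
proof -
  let ?L = "letters n"
  let ?Z = "omega_pow n (int n - int k + 2 * int l)"
  have wf: "is_form n w" unfolding w_def is_form_def by (simp add: w_formula)
  define core where "core A B J1 J2 = (if A \<inter> B = {} then sg A B * sg (A \<union> B) (?L - (A \<union> B)) *
      sg (pp n J1) A * sg (pp n J2) B * ?Z (?L - (A \<union> B)) else 0)" for A B J1 J2
  define Phi where "Phi A J1 B J2 = core A B J1 J2 * u (A \<union> pp n J1) * w (B \<union> pp n J2)" for A J1 B J2
  have "wedge n (wedge n (Lam_pow n l u) (Lam_pow n l w)) ?Z ?L =
     (\<Sum>A\<in>Pow ?L. \<Sum>B\<in>Pow ?L. if A \<inter> B = {} then sg A B * sg (A \<union> B) (?L - (A \<union> B)) *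
        Lam_pow n l u A * Lam_pow n l w B * ?Z (?L - (A \<union> B)) else 0)"
    by (rule stepA)
  also have "\<dots> = (\<Sum>A\<in>Pow ?L. \<Sum>B\<in>Pow ?L. cL l * cL l * (\<Sum>J1\<in>FJ n l A. \<Sum>J2\<in>FJ n l B. Phi A J1 B J2))"
  proof (intro sum.cong refl)
    fix A B assume A: "A \<in> Pow ?L" and B: "B \<in> Pow ?L"
    show "(if A \<inter> B = {} then sg A B * sg (A \<union> B) (?L - (A \<union> B)) *
        Lam_pow n l u A * Lam_pow n l w B * ?Z (?L - (A \<union> B)) else 0) =
        cL l * cL l * (\<Sum>J1\<in>FJ n l A. \<Sum>J2\<in>FJ n l B. Phi A J1 B J2)"
    proof (cases "A \<inter> B = {}")
      case False then show ?thesis by (simp add: Phi_def core_def)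
    next
      case True
      have prod: "Lam_pow n l u A * Lam_pow n l w B = cL l * cL l * (\<Sum>J1\<in>FJ n l A. \<Sum>J2\<in>FJ n l B.
          (sg (pp n J1) A * u (A \<union> pp n J1)) * (sg (pp n J2) B * w (B \<union> pp n J2)))"
        using A B by (simp add: Lam_pow_formula[OF uf] Lam_pow_formula[OF wf] sum_product mult_ac)
      let ?K = "sg A B * sg (A \<union> B) (?L - (A \<union> B)) * ?Z (?L - (A \<union> B))"
      have Phi_eq: "Phi A J1 B J2 = ?K * ((sg (pp n J1) A * u (A \<union> pp n J1)) * (sg (pp n J2) B * w (B \<union> pp n J2)))"
        for J1 J2 using True by (simp add: Phi_def core_def mult_ac)
      have "(if A \<inter> B = {} then sg A B * sg (A \<union> B) (?L - (A \<union> B)) *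
        Lam_pow n l u A * Lam_pow n l w B * ?Z (?L - (A \<union> B)) else 0) = ?K * (Lam_pow n l u A * Lam_pow n l w B)"
        using True by (simp only: if_True mult_ac simp_thms)
      also have "\<dots> = ?K * (cL l * cL l * (\<Sum>J1\<in>FJ n l A. \<Sum>J2\<in>FJ n l B.
          (sg (pp n J1) A * u (A \<union> pp n J1)) * (sg (pp n J2) B * w (B \<union> pp n J2))))"
        unfolding prod ..
      also have "\<dots> = cL l * cL l * (\<Sum>J1\<in>FJ n l A. \<Sum>J2\<in>FJ n l B. Phi A J1 B J2)"
        by (simp only: Phi_eq sum_distrib_left mult_ac)
      finally show ?thesis .
    qed
  qed
  also have "\<dots> = cL l * cL l * (\<Sum>A\<in>Pow ?L. \<Sum>J1\<in>FJ n l A. \<Sum>B\<in>Pow ?L. \<Sum>J2\<in>FJ n l B. Phi A J1 B J2)"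
    by (simp add: sum_distrib_left) (rule sum.cong[OF refl], rule sum.swap)
  also have "\<dots> = cL l * cL l * (\<Sum>S1\<in>Pow ?L. \<Sum>J1\<in>PJ n l S1. \<Sum>B\<in>Pow ?L. \<Sum>J2\<in>FJ n l B. Phi (S1 - pp n J1) J1 B J2)"
    by (simp only: reindexR[where h = "\<lambda>A J1. \<Sum>B\<in>Pow ?L. \<Sum>J2\<in>FJ n l B. Phi A J1 B J2"])
  also have "\<dots> = cL l * cL l * (\<Sum>S1\<in>Pow ?L. \<Sum>J1\<in>PJ n l S1. \<Sum>T\<in>Pow ?L. \<Sum>J2\<in>PJ n l T. Phi (S1 - pp n J1) J1 (T - pp n J2) J2)"
    by (simp only: reindexR)
  also have "\<dots> = cL l * cL l * (\<Sum>S1\<in>Pow ?L. \<Sum>J1\<in>PJ n l S1. \<Sum>S2\<in>Pow ?L. \<Sum>J2\<in>PJ n l (swp' n S2).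
       Phi (S1 - pp n J1) J1 (swp' n S2 - pp n J2) J2)"
    by (simp only: reindex_swp[where f = "\<lambda>T. \<Sum>J2\<in>PJ n l T. Phi (_ - pp n _) _ (T - pp n J2) J2"])
  also have "\<dots> = cL l * cL l * (\<Sum>S1\<in>Pow ?L. \<Sum>J1\<in>PJ n l S1. \<Sum>S2\<in>Pow ?L. \<Sum>J2\<in>PJ n l S2.
       Psi n k l S1 S2 J1 J2 * (u S1 * cnj (u S2) * Ef n S2))"
  proof (intro arg_cong[where f = "\<lambda>x. cL l * cL l * x"] sum.cong refl)
    fix S1 J1 S2 J2 assume S1: "S1 \<in> Pow ?L" and J1: "J1 \<in> PJ n l S1" and S2: "S2 \<in> Pow ?L"
    show "PJ n l (swp' n S2) = PJ n l S2" using S2 PJ_swp by blast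
    assume J2: "J2 \<in> PJ n l S2"
    have J2': "J2 \<subseteq> pairs n (swp' n S2)" using J2 S2 pairs_swp by (auto simp: PJ_def)
    have e1: "S1 - pp n J1 \<union> pp n J1 = S1"
      using J1 pp_mono[of J1 "pairs n S1" n] pp_pairs_sub[of n S1] by (auto simp: PJ_def)
    have e2: "swp' n S2 - pp n J2 \<union> pp n J2 = swp' n S2"
      using J2' pp_mono[of J2 "pairs n (swp' n S2)" n] pp_pairs_sub[of n "swp' n S2"] by auto
    have ew: "w (swp' n S2) = Ef n S2 * cnj (u S2)"
      using S2 unfolding w_def by (simp add: w_formula swp'_letters swp'_swp')
    show "Phi (S1 - pp n J1) J1 (swp' n S2 - pp n J2) J2 = Psi n k l S1 S2 J1 J2 * (u S1 * cnj (u S2) * Ef n S2)"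
      unfolding Phi_def e1 e2 ew by (simp add: Psi_def core_def Let_def mult_ac)
  qed
  also have "\<dots> = cL l * cL l * (\<Sum>S1\<in>Pow ?L. \<Sum>S2\<in>Pow ?L. u S1 * cnj (u S2) * Ef n S2 *
        (\<Sum>J1\<in>PJ n l S1. \<Sum>J2\<in>PJ n l S2. Psi n k l S1 S2 J1 J2))"
  proof (rule arg_cong[where f = "\<lambda>x. cL l * cL l * x"], rule sum.cong[OF refl])
    fix S1 assume "S1 \<in> Pow ?L"
    show "(\<Sum>J1\<in>PJ n l S1. \<Sum>S2\<in>Pow ?L. \<Sum>J2\<in>PJ n l S2. Psi n k l S1 S2 J1 J2 * (u S1 * cnj (u S2) * Ef n S2)) =
        (\<Sum>S2\<in>Pow ?L. u S1 * cnj (u S2) * Ef n S2 * (\<Sum>J1\<in>PJ n l S1. \<Sum>J2\<in>PJ n l S2. Psi n k l S1 S2 J1 J2))"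
      by (subst sum.swap) (simp add: sum_distrib_left sum_distrib_right mult_ac)
  qed
  finally show ?thesis .
qed


lemma wedge_zero:
  assumes u: "is_kform n k u" and v: "is_kform n k v" and R: "R \<noteq> letters n"
  shows "wedge n (wedge n (Lam_pow n l u) (Lam_pow n l v)) (omega_pow n (int n - int k + 2 * int l)) R = 0"
proof (cases "R \<subseteq> letters n")
  case False then show ?thesis by (simp add: wedge_sg)
next
  case RL: True
  let ?X = "Lam_pow n l u" and ?Y = "Lam_pow n l v" and ?Z = "omega_pow n (int n - int k + 2 * int l)"
  have fR: "finite R" using RL by (rule finite_subset) simp
  have "(\<Sum>S\<in>Pow R. sg S (R - S) * wedge n ?X ?Y S * ?Z (R - S)) = 0"
  proof (rule sum.neutral, rule ballI)
    fix S assume S: "S \<in> Pow R"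
    show "sg S (R - S) * wedge n ?X ?Y S * ?Z (R - S) = 0"
    proof (rule ccontr)
      assume h: "sg S (R - S) * wedge n ?X ?Y S * ?Z (R - S) \<noteq> 0"
      then have W: "wedge n ?X ?Y S \<noteq> 0" and Z: "?Z (R - S) \<noteq> 0" by auto
      have SL: "S \<subseteq> letters n" using S RL by auto
      have "(\<Sum>S'\<in>Pow S. sg S' (S - S') * ?X S' * ?Y (S - S')) \<noteq> 0" using W SL by (simp add: wedge_sg)
      then obtain S' where S': "S' \<in> Pow S" "sg S' (S - S') * ?X S' * ?Y (S - S') \<noteq> 0"
        using sum.not_neutral_contains_not_neutral by blast
      have c1: "card S' + 2 * l = k" using Lam_pow_support[OF u] S'(2) by auto
      have c2: "card (S - S') + 2 * l = k" using Lam_pow_support[OF v] S'(2) by auto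
      have cz: "0 \<le> int n - int k + 2 * int l" "card (R - S) = 2 * nat (int n - int k + 2 * int l)"
        using omega_pow_nz_card[OF Z] by auto
      have SR: "S \<subseteq> R" using S by simp
      have S'S: "S' \<subseteq> S" using S' by simp
      have fS: "finite S" by (rule finite_subset[OF SR fR])
      have fS': "finite S'" by (rule finite_subset[OF S'S fS])
      have "card (S - S') = card S - card S'" by (rule card_Diff_subset[OF fS' S'S])
      moreover have "card S' \<le> card S" by (rule card_mono[OF fS S'S])
      ultimately have "card S = card S' + card (S - S')" by simp
      moreover have "card (R - S) = card R - card S" by (rule card_Diff_subset[OF fS SR])
      moreover have "card S \<le> card R" by (rule card_mono[OF fR SR])
      ultimately have "card R = card S' + card (S - S') + card (R - S)" by simp
      then have "card R = 2 * n" using c1 c2 cz by linarith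
      then have "R = letters n" using RL card_subset_eq[of "letters n" R] by (simp add: letters_def)
      then show False using R by simp
    qed
  qed
  then show ?thesis using RL by (simp add: wedge_sg)
qed

theorem theorem1p1:
  fixes n k :: nat and u :: form and b :: "nat \<Rightarrow> int"
  assumes u: "is_kform n k u"
    and b0: "b 0 = 1"
    and brec: "\<forall>p\<ge>1. (\<Sum>l=0..p. (-1) ^ l * int (p choose l) ^ 2 * b l) = 0"
  shows "scale ((-1) ^ (k * (k + 1) div 2) * form_inner n u u) (omega_pow n (int n)) =
    (\<lambda>S. \<Sum>l=0..n. (-1) ^ l * of_int (b l) *
        wedge n (wedge n (Lam_pow n l u) (Lam_pow n l (fconj n (Iop n u))))
          (omega_pow n (int n - int k + 2 * int l)) S)"
proof (rule ext)
  fix R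
  let ?L = "letters n"
  define c :: complex where "c = (-1) ^ (k * (k + 1) div 2)"
  have uf: "is_form n u" using u by (simp add: is_kform_def)
  have wk: "is_kform n k (fconj n (Iop n u))" using w_kform[OF u] .
  show "scale ((-1) ^ (k * (k + 1) div 2) * form_inner n u u) (omega_pow n (int n)) R =
    (\<Sum>l=0..n. (-1) ^ l * of_int (b l) *
        wedge n (wedge n (Lam_pow n l u) (Lam_pow n l (fconj n (Iop n u))))
          (omega_pow n (int n - int k + 2 * int l)) R)"
  proof (cases "R = ?L")
    case False
    then show ?thesis using wedge_zero[OF u wk False] by (simp add: scale_def omega_pow_top)
  next
    case True
    define P where "P l S1 S2 = (\<Sum>J1\<in>PJ n l S1. \<Sum>J2\<in>PJ n l S2. Psi n k l S1 S2 J1 J2)" for l S1 S2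
    define K where "K S1 S2 = Ef n S2 * (\<Sum>l=0..n. (-1) ^ l * of_int (b l) * (cL l * cL l) * P l S1 S2)" for S1 S2
    have "(\<Sum>l=0..n. (-1) ^ l * of_int (b l) *
        wedge n (wedge n (Lam_pow n l u) (Lam_pow n l (fconj n (Iop n u))))
          (omega_pow n (int n - int k + 2 * int l)) R)
      = (\<Sum>l=0..n. \<Sum>S1\<in>Pow ?L. \<Sum>S2\<in>Pow ?L.
          u S1 * cnj (u S2) * ((-1) ^ l * of_int (b l) * (cL l * cL l) * Ef n S2 * P l S1 S2))"
      unfolding True wedge_chain[OF uf] P_def by (simp add: sum_distrib_left mult_ac)
    also have "\<dots> = (\<Sum>S1\<in>Pow ?L. \<Sum>S2\<in>Pow ?L. \<Sum>l=0..n.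
          u S1 * cnj (u S2) * ((-1) ^ l * of_int (b l) * (cL l * cL l) * Ef n S2 * P l S1 S2))"
      by (subst sum.swap) (rule sum.cong[OF refl], rule sum.swap)
    also have "\<dots> = (\<Sum>S1\<in>Pow ?L. \<Sum>S2\<in>Pow ?L. u S1 * cnj (u S2) * K S1 S2)"
      by (simp add: K_def sum_distrib_left mult_ac)
    also have "\<dots> = (\<Sum>S1\<in>Pow ?L. \<Sum>S2\<in>Pow ?L. if S1 = S2 then u S1 * cnj (u S1) * 2 ^ card S1 * (c * cOm n) else 0)"
    proof (intro sum.cong refl)
      fix S1 S2 assume S1: "S1 \<in> Pow ?L" and S2: "S2 \<in> Pow ?L"
      show "u S1 * cnj (u S2) * K S1 S2 = (if S1 = S2 then u S1 * cnj (u S1) * 2 ^ card S1 * (c * cOm n) else 0)"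
      proof (cases "card S1 = k \<and> card S2 = k")
        case True
        then show ?thesis using key[OF b0 brec, of S1 n S2 k] S1 S2
          by (auto simp: K_def P_def c_def mult_ac)
      next
        case False
        then have "u S1 = 0 \<or> u S2 = 0" using u by (auto simp: is_kform_def)
        moreover have "S1 = S2 \<Longrightarrow> u S1 = 0" using False u by (auto simp: is_kform_def)
        ultimately show ?thesis by auto
      qed
    qed
    also have "\<dots> = (\<Sum>S\<in>Pow ?L. u S * cnj (u S) * 2 ^ card S * (c * cOm n))"
      by (simp add: sum.delta')
    also have "\<dots> = c * form_inner n u u * cOm n"
      by (simp add: form_inner_def sum_distrib_left sum_distrib_right mult_ac)
    finally show ?thesis using True by (simp add: scale_def omega_pow_top c_def)
  qed
qed


end
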